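(* For every positive integer $k$, every graph $G\in\mathcal{G}_k$ is connected and cubic and satisfies $\alpha(G)=6k$ and $\mathrm{diss}(G)=10k$.
   Context: All graphs are finite; $\alpha(G)$ is the independence number; a set $D$ of vertices is a dissociation set if the induced subgraph $G[D]$ has maximum degree at most $1$, and $\mathrm{diss}(G)$ is the maximum order of a dissociation set. Let $K_4^*$ be the graph obtained from $K_4$ with vertices $a,b,c,d$ by subdividing the edge $ab$ twice, i.e. replacing $ab$ by a path $a\,x\,y\,b$ with new vertices $x,y$ (the subdivision vertices). For a positive integer $k$, $\mathcal{H}_k$ is the set of all connected multigraphs $H$ (parallel edges allowed, no loops) of maximum degree at most $3$ such that: (i) $3n_1+2n_2+n_3=6k$, where $n_i$ is the number of vertices of degree $i$ (degree = number of incident edges); (ii) $H$ has an induced matching $M$ with $|M|=k$ covering all vertices of degree $1$; (iii) $H-M$ has an orientation in which every vertex of $H$ not incident with an edge of $M$ has exactly two outgoing edges. $\mathcal{G}_k$ is the set of all graphs $G$ obtained from some $H\in\mathcal{H}_k$ by replacing each vertex $w$ of $H$ by a gadget $G_w$ with designated attachment vertices, one per edge of $H$ at $w$, and replacing each edge $ww'$ of $H$ by an edge joining the attachment vertex of $G_w$ assigned to this edge with the attachment vertex of $G_{w'}$ assigned to this edge (distinct edges of $H$ use distinct attachment vertices). The gadgets are: if $\deg_H(w)=3$, $G_w$ is a triangle and each of its three vertices is the attachment vertex for one of the three edges at $w$; if $\deg_H(w)=2$, $G_w$ is a copy of $K_4^*$ whose two subdivision vertices $x,y$ are the attachment vertices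 for the two edges at $w$; if $\deg_H(w)=1$, $G_w$ is one of the following two graphs on $9$ vertices $z,a_1,a_2,p_1,q_1,r_1,p_2,q_2,r_2$, with $z$ the attachment vertex: both have edges $za_1$, $za_2$, the triangles $p_1q_1r_1$ and $p_2q_2r_2$, and the edge $r_1r_2$; the first additionally has edges $a_1p_1,a_1q_1,a_2p_2,a_2q_2$, the second additionally has edges $a_1p_1,a_1q_2,a_2p_2,a_2q_1$. *)

theory Defs
  imports Main
begin

definition g_connected :: "'a set \<Rightarrow> ('a \<Rightarrow> 'a \<Rightarrow> bool) \<Rightarrow> bool" where
  "g_connected V adj \<longleftrightarrow> V \<noteq> {} \<and>
     (\<forall>u\<in>V. \<forall>v\<in>V. (\<lambda>x y. x \<in> V \<and> y \<in> V \<and> adj x y)\<^sup>*\<^sup>* u v)"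

definition g_cubic :: "'a set \<Rightarrow> ('a \<Rightarrow> 'a \<Rightarrow> bool) \<Rightarrow> bool" where
  "g_cubic V adj \<longleftrightarrow> (\<forall>v\<in>V. card {u\<in>V. adj v u} = 3)"

definition independent_set :: "'a set \<Rightarrow> ('a \<Rightarrow> 'a \<Rightarrow> bool) \<Rightarrow> 'a set \<Rightarrow> bool" where
  "independent_set V adj S \<longleftrightarrow> S \<subseteq> V \<and> (\<forall>u\<in>S. \<forall>v\<in>S. \<not> adj u v)"

definition alpha :: "'a set \<Rightarrow> ('a \<Rightarrow> 'a \<Rightarrow> bool) \<Rightarrow> nat" where
  "alpha V adj = Max {card S | S. independent_set V adj S}"

definition dissociation_set :: "'a set \<Rightarrow> ('a \<Rightarrow> 'a \<Rightarrow> bool) \<Rightarrow> 'a set \<Rightarrow> bool" where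
  "dissociation_set V adj S \<longleftrightarrow> S \<subseteq> V \<and> (\<forall>v\<in>S. card {u\<in>S. adj v u} \<le> 1)"

definition diss :: "'a set \<Rightarrow> ('a \<Rightarrow> 'a \<Rightarrow> bool) \<Rightarrow> nat" where
  "diss V adj = Max {card S | S. dissociation_set V adj S}"

definition mdeg :: "'e set \<Rightarrow> ('e \<Rightarrow> 'v set) \<Rightarrow> 'v \<Rightarrow> nat" where
  "mdeg E ends v = card {e\<in>E. v \<in> ends e}"

definition multigraph :: "'v set \<Rightarrow> 'e set \<Rightarrow> ('e \<Rightarrow> 'v set) \<Rightarrow> bool" where
  "multigraph V E ends \<longleftrightarrow> finite V \<and> finite E \<and> (\<forall>e\<in>E. ends e \<subseteq> V \<and> card (ends e) = 2)"

definition m_connected :: "'v set \<Rightarrow> 'e set \<Rightarrow> ('e \<Rightarrow> 'v set) \<Rightarrow> bool" where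
  "m_connected V E ends \<longleftrightarrow> V \<noteq> {} \<and>
     (\<forall>u\<in>V. \<forall>v\<in>V. (\<lambda>x y. \<exists>e\<in>E. ends e = {x, y})\<^sup>*\<^sup>* u v)"

definition ncount :: "'v set \<Rightarrow> 'e set \<Rightarrow> ('e \<Rightarrow> 'v set) \<Rightarrow> nat \<Rightarrow> nat" where
  "ncount V E ends i = card {v\<in>V. mdeg E ends v = i}"

definition induced_matching :: "'e set \<Rightarrow> ('e \<Rightarrow> 'v set) \<Rightarrow> 'e set \<Rightarrow> bool" where
  "induced_matching E ends M \<longleftrightarrow> M \<subseteq> E \<and>
     (\<forall>e\<in>M. \<forall>e'\<in>M. e \<noteq> e' \<longrightarrow> ends e \<inter> ends e' = {}) \<and>
     (\<forall>e\<in>E. ends e \<subseteq> \<Union>(ends ` M) \<longrightarrow> e \<in> M)"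

definition in_Hk :: "nat \<Rightarrow> 'v set \<Rightarrow> 'e set \<Rightarrow> ('e \<Rightarrow> 'v set) \<Rightarrow> bool" where
  "in_Hk k V E ends \<longleftrightarrow>
     multigraph V E ends \<and> m_connected V E ends \<and>
     (\<forall>v\<in>V. mdeg E ends v \<le> 3) \<and>
     3 * ncount V E ends 1 + 2 * ncount V E ends 2 + ncount V E ends 3 = 6 * k \<and>
     (\<exists>M. induced_matching E ends M \<and> card M = k \<and>
        (\<forall>v\<in>V. mdeg E ends v = 1 \<longrightarrow> v \<in> \<Union>(ends ` M)) \<and>
        (\<exists>tl :: 'e \<Rightarrow> 'v. (\<forall>e\<in>E - M. tl e \<in> ends e) \<and>
           (\<forall>v\<in>V - \<Union>(ends ` M). card {e\<in>E - M. tl e = v} = 2)))"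

text \<open>Degree 3: triangle on 0,1,2.
  Degree 2: K4* with a=0, b=1, c=2, d=3, x=4, y=5.
  Degree 1: z=0, a1=1, a2=2, p1=3, q1=4, r1=5, p2=6, q2=7, r2=8;
  the boolean selects the first (True) or the second (False) gadget.\<close>

definition gadget_verts :: "nat \<Rightarrow> nat set" where
  "gadget_verts d = (if d = 3 then {0,1,2} else if d = 2 then {0..5}
                     else if d = 1 then {0..8} else {})"

definition attach_verts :: "nat \<Rightarrow> nat set" where
  "attach_verts d = (if d = 3 then {0,1,2} else if d = 2 then {4,5}
                     else if d = 1 then {0} else {})"

definition gadget_edge_list :: "nat \<Rightarrow> bool \<Rightarrow> (nat \<times> nat) list" where
  "gadget_edge_list d t =
    (if d = 3 then [(0,1),(1,2),(0,2)]
     else if d = 2 then [(0,2),(0,3),(1,2),(1,3),(2,3),(0,4),(4,5),(5,1)]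
     else if d = 1 then
       [(0,1),(0,2),(3,4),(4,5),(3,5),(6,7),(7,8),(6,8),(5,8)] @
       (if t then [(1,3),(1,4),(2,6),(2,7)] else [(1,3),(1,7),(2,6),(2,4)])
     else [])"

definition gadget_adj :: "nat \<Rightarrow> bool \<Rightarrow> nat \<Rightarrow> nat \<Rightarrow> bool" where
  "gadget_adj d t i j \<longleftrightarrow> (i, j) \<in> set (gadget_edge_list d t) \<or> (j, i) \<in> set (gadget_edge_list d t)"

text \<open>att w assigns to each edge of H at w its attachment vertex in the gadget of w.\<close>
definition valid_attach :: "'v set \<Rightarrow> 'e set \<Rightarrow> ('e \<Rightarrow> 'v set) \<Rightarrow> ('v \<Rightarrow> 'e \<Rightarrow> nat) \<Rightarrow> bool" where
  "valid_attach V E ends att \<longleftrightarrow>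
     (\<forall>w\<in>V. bij_betw (att w) {e\<in>E. w \<in> ends e} (attach_verts (mdeg E ends w)))"

definition GV :: "'v set \<Rightarrow> 'e set \<Rightarrow> ('e \<Rightarrow> 'v set) \<Rightarrow> ('v \<times> nat) set" where
  "GV V E ends = {(w, i). w \<in> V \<and> i \<in> gadget_verts (mdeg E ends w)}"

definition GA :: "'v set \<Rightarrow> 'e set \<Rightarrow> ('e \<Rightarrow> 'v set) \<Rightarrow> ('v \<Rightarrow> 'e \<Rightarrow> nat) \<Rightarrow> ('v \<Rightarrow> bool)
                  \<Rightarrow> 'v \<times> nat \<Rightarrow> 'v \<times> nat \<Rightarrow> bool" where
  "GA V E ends att gtype p q \<longleftrightarrow>
     (fst p = fst q \<and> gadget_adj (mdeg E ends (fst p)) (gtype (fst p)) (snd p) (snd q)) \<or>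
     (\<exists>e\<in>E. ends e = {fst p, fst q} \<and> fst p \<noteq> fst q \<and>
            att (fst p) e = snd p \<and> att (fst q) e = snd q)"

end

theory Submission
  imports Defs
begin


definition nbl :: "nat \<Rightarrow> bool \<Rightarrow> nat \<Rightarrow> nat list" where
 "nbl d t i = map snd (filter (\<lambda>p. fst p = i) (gadget_edge_list d t)) @ map fst (filter (\<lambda>p. snd p = i) (gadget_edge_list d t))"

lemma adj_nbl: "gadget_adj d t i j \<longleftrightarrow> j \<in> set (nbl d t i)"
  by (force simp: gadget_adj_def nbl_def image_iff)

lemma gv1: "gadget_verts 1 = {0,1,2,3,4,5,6,7,8}" by (auto simp: gadget_verts_def)
lemma gv1s: "gadget_verts (Suc 0) = {0,1,2,3,4,5,6,7,8}" by (auto simp: gadget_verts_def)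
lemma av1s: "attach_verts (Suc 0) = {0}" by (auto simp: attach_verts_def)
lemma gv2: "gadget_verts 2 = {0,1,2,3,4,5}" by (auto simp: gadget_verts_def)
lemma gv3: "gadget_verts 3 = {0,1,2}" by (auto simp: gadget_verts_def)
lemma av1: "attach_verts 1 = {0}" by (auto simp: attach_verts_def)
lemma av2: "attach_verts 2 = {4,5}" by (auto simp: attach_verts_def)
lemma av3: "attach_verts 3 = {0,1,2}" by (auto simp: attach_verts_def)
lemma gel1: "gadget_edge_list (Suc 0) t = [(0,1),(0,2),(3,4),(4,5),(3,5),(6,7),(7,8),(6,8),(5,8)] @
       (if t then [(1,3),(1,4),(2,6),(2,7)] else [(1,3),(1,7),(2,6),(2,4)])" by (simp add: gadget_edge_list_def)
lemma gel1n: "gadget_edge_list 1 t = [(0,1),(0,2),(3,4),(4,5),(3,5),(6,7),(7,8),(6,8),(5,8)] @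
       (if t then [(1,3),(1,4),(2,6),(2,7)] else [(1,3),(1,7),(2,6),(2,4)])" by (simp add: gadget_edge_list_def)
lemma gel2: "gadget_edge_list 2 t = [(0,2),(0,3),(1,2),(1,3),(2,3),(0,4),(4,5),(5,1)]" by (simp add: gadget_edge_list_def)
lemma gel3: "gadget_edge_list 3 t = [(0,1),(1,2),(0,2)]" by (simp add: gadget_edge_list_def)

lemma gdeg1: "\<forall>i\<in>gadget_verts 1. card (set (nbl 1 t i)) + (if i \<in> attach_verts 1 then 1 else 0) = 3"
  unfolding gv1 av1 by (cases t) (simp_all add: nbl_def gel1)
lemma gdeg2: "\<forall>i\<in>gadget_verts 2. card (set (nbl 2 t i)) + (if i \<in> attach_verts 2 then 1 else 0) = 3"
  unfolding gv2 av2 by (simp add: nbl_def gel2)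
lemma gdeg3: "\<forall>i\<in>gadget_verts 3. card (set (nbl 3 t i)) + (if i \<in> attach_verts 3 then 1 else 0) = 3"
  unfolding gv3 av3 by (simp add: nbl_def gel3)


lemma indep_edges: "\<forall>i\<in>S. \<forall>j\<in>S. \<not> gadget_adj d t i j \<Longrightarrow> \<forall>(i,j)\<in>set(gadget_edge_list d t). \<not>(i\<in>S \<and> j\<in>S)"
  by (auto simp: gadget_adj_def)


definition ind :: "bool \<Rightarrow> int" where "ind P = (if P then 1 else 0)"

lemma ind_nonneg: "0 \<le> ind P" by (simp add: ind_def)

lemma card_ind: "finite A \<Longrightarrow> int (card (A \<inter> S)) = (\<Sum>i\<in>A. ind (i \<in> S))"
  by (simp add: ind_def sum.If_cases Int_commute)

lemma card_sub_sum: "S \<subseteq> A \<Longrightarrow> finite A \<Longrightarrow> int (card S) = (\<Sum>i\<in>A. ind (i \<in> S))"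
  using card_ind[of A S] by (simp add: Int_absorb1)

lemma nbcard: "int (card {j\<in>S. gadget_adj d t i j}) = (\<Sum>j\<in>set (nbl d t i). ind (j \<in> S))"
proof -
  have "{j\<in>S. gadget_adj d t i j} = set (nbl d t i) \<inter> S" by (auto simp: adj_nbl)
  then show ?thesis by (simp add: card_ind)
qed

definition cc :: "nat set \<Rightarrow> nat set \<Rightarrow> nat \<Rightarrow> int" where
  "cc S X i = (if i \<notin> S then -1 else if i \<in> X then 0 else 1)"

lemma cc_ind: "cc S X i = 2 * ind (i\<in>S) - ind (i\<in>S \<and> i\<in>X) - 1" by (simp add: cc_def ind_def)

lemma boolA1T: "\<lbrakk>\<not>(b0 \<and> b1); \<not>(b0 \<and> b2); \<not>(b3 \<and> b4); \<not>(b4 \<and> b5); \<not>(b3 \<and> b5); \<not>(b6 \<and> b7); \<not>(b7 \<and> b8); \<not>(b6 \<and> b8); \<not>(b5 \<and> b8); \<not>(b1 \<and> b3); \<not>(b1 \<and> b4); \<not>(b2 \<and> b6); \<not>(b2 \<and> b7)\<rbrakk> \<Longrightarrow> ind b0 + ind b1 + ind b2 + ind b3 + ind b4 + ind b5 + ind b6 + ind b7 + ind b8 \<le> 3"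
  unfolding ind_def by (cases b0; cases b1; cases b2; cases b3; cases b4; cases b5; cases b6; cases b7; cases b8; simp)

lemma alphaloc1T: assumes "S \<subseteq> gadget_verts 1" "\<forall>i\<in>S. \<forall>j\<in>S. \<not> gadget_adj 1 True i j"
  shows "card S \<le> 3"
proof -
  have c: "int (card S) = (\<Sum>i\<in>{0,1,2,3,4,5,6,7,8}. ind (i\<in>S))"
    using assms(1) by (intro card_sub_sum) (auto simp: gv1 gv1s)
  have e: "\<forall>(i,j)\<in>set(gadget_edge_list 1 True). \<not>(i\<in>S \<and> j\<in>S)" using indep_edges[OF assms(2)] .
  have e2: "\<not>(0\<in>S \<and> 1\<in>S) \<and> \<not>(0\<in>S \<and> 2\<in>S) \<and> \<not>(3\<in>S \<and> 4\<in>S) \<and> \<not>(4\<in>S \<and> 5\<in>S) \<and> \<not>(3\<in>S \<and> 5\<in>S) \<and> \<not>(6\<in>S \<and> 7\<in>S) \<and> \<not>(7\<in>S \<and> 8\<in>S) \<and> \<not>(6\<in>S \<and> 8\<in>S) \<and> \<not>(5\<in>S \<and> 8\<in>S) \<and> \<not>(1\<in>S \<and> 3\<in>S) \<and> \<not>(1\<in>S \<and> 4\<in>S) \<and> \<not>(2\<in>S \<and> 6\<in>S) \<and> \<not>(2\<in>S \<and> 7\<in>S)" using e by (simp add: gel1 gel1n)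
  have "ind (0\<in>S) + ind (1\<in>S) + ind (2\<in>S) + ind (3\<in>S) + ind (4\<in>S) + ind (5\<in>S) + ind (6\<in>S) + ind (7\<in>S) + ind (8\<in>S) \<le> 3"
    using e2 by (intro boolA1T) auto
  then have "int (card S) \<le> 3" unfolding c by (simp add: algebra_simps)
  then show ?thesis by simp
qed

lemma boolD1T: "\<lbrakk>b0 \<longrightarrow> ind b1 + ind b2 + ind x0 \<le> 1; b1 \<longrightarrow> ind b3 + ind b4 + ind b0 \<le> 1; b2 \<longrightarrow> ind b6 + ind b7 + ind b0 \<le> 1; b3 \<longrightarrow> ind b4 + ind b5 + ind b1 \<le> 1; b4 \<longrightarrow> ind b5 + ind b3 + ind b1 \<le> 1; b5 \<longrightarrow> ind b8 + ind b4 + ind b3 \<le> 1; b6 \<longrightarrow> ind b7 + ind b8 + ind b2 \<le> 1; b7 \<longrightarrow> ind b8 + ind b6 + ind b2 \<le> 1; b8 \<longrightarrow> ind b7 + ind b6 + ind b5 \<le> 1\<rbrakk> \<Longrightarrow> 3 * (ind b0 + ind b1 + ind b2 + ind b3 + ind b4 + ind b5 + ind b6 + ind b7 + ind b8) \<le> 15 + ((2 * ind b0 - ind (b0 \<and> x0) - 1))"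
  unfolding ind_def by (cases b0; cases b1; cases b2; cases b3; cases b4; cases b5; cases b6; cases b7; cases b8; cases x0; simp)

lemma dissloc1T: assumes "S \<subseteq> gadget_verts 1" "X \<subseteq> attach_verts 1"
   "\<forall>i\<in>S. card {j\<in>S. gadget_adj 1 True i j} + (if i\<in>X then 1 else 0) \<le> 1"
  shows "3 * int (card S) \<le> 15 + (\<Sum>i\<in>attach_verts 1. cc S X i)"
proof -
  have c: "int (card S) = (\<Sum>i\<in>{0,1,2,3,4,5,6,7,8}. ind (i\<in>S))"
    using assms(1) by (intro card_sub_sum) (auto simp: gv1 gv1s)
  have h: "\<forall>i\<in>{0,1,2,3,4,5,6,7,8}. i\<in>S \<longrightarrow> (\<Sum>j\<in>set(nbl 1 True i). ind (j \<in> S)) + (if i \<in> attach_verts 1 then ind (i\<in>X) else 0) \<le> 1"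
  proof (intro ballI impI)
    fix i assume "i \<in> {0,1,2,3,4,5,6,7,8}" "i \<in> S"
    then have "int (card {j\<in>S. gadget_adj 1 True i j}) + ind (i\<in>X) \<le> 1" using assms(3) by (force simp: ind_def split: if_splits)
    moreover have "i \<notin> attach_verts 1 \<Longrightarrow> ind (i\<in>X) = 0" using assms(2) by (auto simp: ind_def)
    ultimately show "(\<Sum>j\<in>set(nbl 1 True i). ind (j \<in> S)) + (if i \<in> attach_verts 1 then ind (i\<in>X) else 0) \<le> 1"
      using ind_nonneg[of "i\<in>X"] by (auto simp: nbcard split: if_splits)
  qed
  then have h2: "(0\<in>S \<longrightarrow> ind (1\<in>S) + ind (2\<in>S) + ind (0\<in>X) \<le> 1) \<and> (1\<in>S \<longrightarrow> ind (3\<in>S) + ind (4\<in>S) + ind (0\<in>S) \<le> 1) \<and> (2\<in>S \<longrightarrow> ind (6\<in>S) + ind (7\<in>S) + ind (0\<in>S) \<le> 1) \<and> (3\<in>S \<longrightarrow> ind (4\<in>S) + ind (5\<in>S) + ind (1\<in>S) \<le> 1) \<and> (4\<in>S \<longrightarrow> ind (5\<in>S) + ind (3\<in>S) + ind (1\<in>S) \<le> 1) \<and> (5\<in>S \<longrightarrow> ind (8\<in>S) + ind (4\<in>S) + ind (3\<in>S) \<le> 1) \<and> (6\<in>S \<longrightarrow> ind (7\<in>S) + ind (8\<in>S) + ind (2\<in>S) \<le> 1) \<and> (7\<in>S \<longrightarrow> ind (8\<in>S) + ind (6\<in>S) + ind (2\<in>S) \<le> 1) \<and> (8\<in>S \<longrightarrow>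 ind (7\<in>S) + ind (6\<in>S) + ind (5\<in>S) \<le> 1)"
    by (simp add: nbl_def gel1 gel1n av1 av1s add_ac)
  have "3 * (ind (0\<in>S) + ind (1\<in>S) + ind (2\<in>S) + ind (3\<in>S) + ind (4\<in>S) + ind (5\<in>S) + ind (6\<in>S) + ind (7\<in>S) + ind (8\<in>S)) \<le> 15 + ((2 * ind (0\<in>S) - ind (0\<in>S \<and> 0\<in>X) - 1))"
    using h2 by (intro boolD1T) auto
  then show ?thesis unfolding c cc_ind av1 by (simp add: algebra_simps)
qed

lemma boolA1F: "\<lbrakk>\<not>(b0 \<and> b1); \<not>(b0 \<and> b2); \<not>(b3 \<and> b4); \<not>(b4 \<and> b5); \<not>(b3 \<and> b5); \<not>(b6 \<and> b7); \<not>(b7 \<and> b8); \<not>(b6 \<and> b8); \<not>(b5 \<and> b8); \<not>(b1 \<and> b3); \<not>(b1 \<and> b7); \<not>(b2 \<and> b6); \<not>(b2 \<and> b4)\<rbrakk> \<Longrightarrow> ind b0 + ind b1 + ind b2 + ind b3 + ind b4 + ind b5 + ind b6 + ind b7 + ind b8 \<le> 3"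
  unfolding ind_def by (cases b0; cases b1; cases b2; cases b3; cases b4; cases b5; cases b6; cases b7; cases b8; simp)

lemma alphaloc1F: assumes "S \<subseteq> gadget_verts 1" "\<forall>i\<in>S. \<forall>j\<in>S. \<not> gadget_adj 1 False i j"
  shows "card S \<le> 3"
proof -
  have c: "int (card S) = (\<Sum>i\<in>{0,1,2,3,4,5,6,7,8}. ind (i\<in>S))"
    using assms(1) by (intro card_sub_sum) (auto simp: gv1 gv1s)
  have e: "\<forall>(i,j)\<in>set(gadget_edge_list 1 False). \<not>(i\<in>S \<and> j\<in>S)" using indep_edges[OF assms(2)] .
  have e2: "\<not>(0\<in>S \<and> 1\<in>S) \<and> \<not>(0\<in>S \<and> 2\<in>S) \<and> \<not>(3\<in>S \<and> 4\<in>S) \<and> \<not>(4\<in>S \<and> 5\<in>S) \<and> \<not>(3\<in>S \<and> 5\<in>S) \<and> \<not>(6\<in>S \<and> 7\<in>S) \<and> \<not>(7\<in>S \<and> 8\<in>S) \<and> \<not>(6\<in>S \<and> 8\<in>S) \<and> \<not>(5\<in>S \<and> 8\<in>S) \<and> \<not>(1\<in>S \<and> 3\<in>S) \<and> \<not>(1\<in>S \<and> 7\<in>S) \<and> \<not>(2\<in>S \<and> 6\<in>S) \<and> \<not>(2\<in>S \<and> 4\<in>S)" using e by (simp add: gel1 gel1n)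
  have "ind (0\<in>S) + ind (1\<in>S) + ind (2\<in>S) + ind (3\<in>S) + ind (4\<in>S) + ind (5\<in>S) + ind (6\<in>S) + ind (7\<in>S) + ind (8\<in>S) \<le> 3"
    using e2 by (intro boolA1F) auto
  then have "int (card S) \<le> 3" unfolding c by (simp add: algebra_simps)
  then show ?thesis by simp
qed

lemma boolD1F: "\<lbrakk>b0 \<longrightarrow> ind b1 + ind b2 + ind x0 \<le> 1; b1 \<longrightarrow> ind b3 + ind b7 + ind b0 \<le> 1; b2 \<longrightarrow> ind b6 + ind b4 + ind b0 \<le> 1; b3 \<longrightarrow> ind b4 + ind b5 + ind b1 \<le> 1; b4 \<longrightarrow> ind b5 + ind b3 + ind b2 \<le> 1; b5 \<longrightarrow> ind b8 + ind b4 + ind b3 \<le> 1; b6 \<longrightarrow> ind b7 + ind b8 + ind b2 \<le> 1; b7 \<longrightarrow> ind b8 + ind b6 + ind b1 \<le> 1; b8 \<longrightarrow> ind b7 + ind b6 + ind b5 \<le> 1\<rbrakk> \<Longrightarrow> 3 * (ind b0 + ind b1 + ind b2 + ind b3 + ind b4 + ind b5 + ind b6 + ind b7 + ind b8) \<le> 15 + ((2 * ind b0 - ind (b0 \<and> x0) - 1))"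
  unfolding ind_def by (cases b0; cases b1; cases b2; cases b3; cases b4; cases b5; cases b6; cases b7; cases b8; cases x0; simp)

lemma dissloc1F: assumes "S \<subseteq> gadget_verts 1" "X \<subseteq> attach_verts 1"
   "\<forall>i\<in>S. card {j\<in>S. gadget_adj 1 False i j} + (if i\<in>X then 1 else 0) \<le> 1"
  shows "3 * int (card S) \<le> 15 + (\<Sum>i\<in>attach_verts 1. cc S X i)"
proof -
  have c: "int (card S) = (\<Sum>i\<in>{0,1,2,3,4,5,6,7,8}. ind (i\<in>S))"
    using assms(1) by (intro card_sub_sum) (auto simp: gv1 gv1s)
  have h: "\<forall>i\<in>{0,1,2,3,4,5,6,7,8}. i\<in>S \<longrightarrow> (\<Sum>j\<in>set(nbl 1 False i). ind (j \<in> S)) + (if i \<in> attach_verts 1 then ind (i\<in>X) else 0) \<le> 1"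
  proof (intro ballI impI)
    fix i assume "i \<in> {0,1,2,3,4,5,6,7,8}" "i \<in> S"
    then have "int (card {j\<in>S. gadget_adj 1 False i j}) + ind (i\<in>X) \<le> 1" using assms(3) by (force simp: ind_def split: if_splits)
    moreover have "i \<notin> attach_verts 1 \<Longrightarrow> ind (i\<in>X) = 0" using assms(2) by (auto simp: ind_def)
    ultimately show "(\<Sum>j\<in>set(nbl 1 False i). ind (j \<in> S)) + (if i \<in> attach_verts 1 then ind (i\<in>X) else 0) \<le> 1"
      using ind_nonneg[of "i\<in>X"] by (auto simp: nbcard split: if_splits)
  qed
  then have h2: "(0\<in>S \<longrightarrow> ind (1\<in>S) + ind (2\<in>S) + ind (0\<in>X) \<le> 1) \<and> (1\<in>S \<longrightarrow> ind (3\<in>S) + ind (7\<in>S) + ind (0\<in>S) \<le> 1) \<and> (2\<in>S \<longrightarrow> ind (6\<in>S) + ind (4\<in>S) + ind (0\<in>S) \<le> 1) \<and> (3\<in>S \<longrightarrow> ind (4\<in>S) + ind (5\<in>S) + ind (1\<in>S) \<le> 1) \<and> (4\<in>S \<longrightarrow> ind (5\<in>S) + ind (3\<in>S) + ind (2\<in>S) \<le> 1) \<and> (5\<in>S \<longrightarrow> ind (8\<in>S) + ind (4\<in>S) + ind (3\<in>S) \<le> 1) \<and> (6\<in>S \<longrightarrow> ind (7\<in>S) + ind (8\<in>S) + ind (2\<in>S) \<le> 1) \<and> (7\<in>S \<longrightarrow> ind (8\<in>S) + ind (6\<in>S) + ind (1\<in>S) \<le> 1) \<and> (8\<in>S \<longrightarrow>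 ind (7\<in>S) + ind (6\<in>S) + ind (5\<in>S) \<le> 1)"
    by (simp add: nbl_def gel1 gel1n av1 av1s add_ac)
  have "3 * (ind (0\<in>S) + ind (1\<in>S) + ind (2\<in>S) + ind (3\<in>S) + ind (4\<in>S) + ind (5\<in>S) + ind (6\<in>S) + ind (7\<in>S) + ind (8\<in>S)) \<le> 15 + ((2 * ind (0\<in>S) - ind (0\<in>S \<and> 0\<in>X) - 1))"
    using h2 by (intro boolD1F) auto
  then show ?thesis unfolding c cc_ind av1 by (simp add: algebra_simps)
qed

lemma boolA2: "\<lbrakk>\<not>(b0 \<and> b2); \<not>(b0 \<and> b3); \<not>(b1 \<and> b2); \<not>(b1 \<and> b3); \<not>(b2 \<and> b3); \<not>(b0 \<and> b4); \<not>(b4 \<and> b5); \<not>(b5 \<and> b1)\<rbrakk> \<Longrightarrow> ind b0 + ind b1 + ind b2 + ind b3 + ind b4 + ind b5 \<le> 2"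
  unfolding ind_def by (cases b0; cases b1; cases b2; cases b3; cases b4; cases b5; simp)

lemma alphaloc2: assumes "S \<subseteq> gadget_verts 2" "\<forall>i\<in>S. \<forall>j\<in>S. \<not> gadget_adj 2 t i j"
  shows "card S \<le> 2"
proof -
  have c: "int (card S) = (\<Sum>i\<in>{0,1,2,3,4,5}. ind (i\<in>S))"
    using assms(1) by (intro card_sub_sum) (auto simp: gv2)
  have e: "\<forall>(i,j)\<in>set(gadget_edge_list 2 t). \<not>(i\<in>S \<and> j\<in>S)" using indep_edges[OF assms(2)] .
  have e2: "\<not>(0\<in>S \<and> 2\<in>S) \<and> \<not>(0\<in>S \<and> 3\<in>S) \<and> \<not>(1\<in>S \<and> 2\<in>S) \<and> \<not>(1\<in>S \<and> 3\<in>S) \<and> \<not>(2\<in>S \<and> 3\<in>S) \<and> \<not>(0\<in>S \<and> 4\<in>S) \<and> \<not>(4\<in>S \<and> 5\<in>S) \<and> \<not>(5\<in>S \<and> 1\<in>S)" using e by (simp add: gel2)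
  have "ind (0\<in>S) + ind (1\<in>S) + ind (2\<in>S) + ind (3\<in>S) + ind (4\<in>S) + ind (5\<in>S) \<le> 2"
    using e2 by (intro boolA2) auto
  then have "int (card S) \<le> 2" unfolding c by (simp add: algebra_simps)
  then show ?thesis by simp
qed

lemma boolD2: "\<lbrakk>b0 \<longrightarrow> ind b2 + ind b3 + ind b4 \<le> 1; b1 \<longrightarrow> ind b2 + ind b3 + ind b5 \<le> 1; b2 \<longrightarrow> ind b3 + ind b0 + ind b1 \<le> 1; b3 \<longrightarrow> ind b0 + ind b1 + ind b2 \<le> 1; b4 \<longrightarrow> ind b5 + ind b0 + ind x4 \<le> 1; b5 \<longrightarrow> ind b1 + ind b4 + ind x5 \<le> 1\<rbrakk> \<Longrightarrow> 3 * (ind b0 + ind b1 + ind b2 + ind b3 + ind b4 + ind b5) \<le> 10 + ((2 * ind b4 - ind (b4 \<and> x4) - 1) + (2 * ind b5 - ind (b5 \<and> x5) - 1))"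
  unfolding ind_def by (cases b0; cases b1; cases b2; cases b3; cases b4; cases b5; cases x4; cases x5; simp)

lemma dissloc2: assumes "S \<subseteq> gadget_verts 2" "X \<subseteq> attach_verts 2"
   "\<forall>i\<in>S. card {j\<in>S. gadget_adj 2 t i j} + (if i\<in>X then 1 else 0) \<le> 1"
  shows "3 * int (card S) \<le> 10 + (\<Sum>i\<in>attach_verts 2. cc S X i)"
proof -
  have c: "int (card S) = (\<Sum>i\<in>{0,1,2,3,4,5}. ind (i\<in>S))"
    using assms(1) by (intro card_sub_sum) (auto simp: gv2)
  have h: "\<forall>i\<in>{0,1,2,3,4,5}. i\<in>S \<longrightarrow> (\<Sum>j\<in>set(nbl 2 t i). ind (j \<in> S)) + (if i \<in> attach_verts 2 then ind (i\<in>X) else 0) \<le> 1"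
  proof (intro ballI impI)
    fix i assume "i \<in> {0,1,2,3,4,5}" "i \<in> S"
    then have "int (card {j\<in>S. gadget_adj 2 t i j}) + ind (i\<in>X) \<le> 1" using assms(3) by (force simp: ind_def split: if_splits)
    moreover have "i \<notin> attach_verts 2 \<Longrightarrow> ind (i\<in>X) = 0" using assms(2) by (auto simp: ind_def)
    ultimately show "(\<Sum>j\<in>set(nbl 2 t i). ind (j \<in> S)) + (if i \<in> attach_verts 2 then ind (i\<in>X) else 0) \<le> 1"
      using ind_nonneg[of "i\<in>X"] by (auto simp: nbcard split: if_splits)
  qed
  then have h2: "(0\<in>S \<longrightarrow> ind (2\<in>S) + ind (3\<in>S) + ind (4\<in>S) \<le> 1) \<and> (1\<in>S \<longrightarrow> ind (2\<in>S) + ind (3\<in>S) + ind (5\<in>S) \<le> 1) \<and> (2\<in>S \<longrightarrow> ind (3\<in>S) + ind (0\<in>S) + ind (1\<in>S) \<le> 1) \<and> (3\<in>S \<longrightarrow> ind (0\<in>S) + ind (1\<in>S) + ind (2\<in>S) \<le> 1) \<and> (4\<in>S \<longrightarrow> ind (5\<in>S) + ind (0\<in>S) + ind (4\<in>X) \<le> 1) \<and> (5\<in>S \<longrightarrow> ind (1\<in>S) + ind (4\<in>S) + ind (5\<in>X) \<le> 1)"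
    by (simp add: nbl_def gel2 av2 add_ac)
  have "3 * (ind (0\<in>S) + ind (1\<in>S) + ind (2\<in>S) + ind (3\<in>S) + ind (4\<in>S) + ind (5\<in>S)) \<le> 10 + ((2 * ind (4\<in>S) - ind (4\<in>S \<and> 4\<in>X) - 1) + (2 * ind (5\<in>S) - ind (5\<in>S \<and> 5\<in>X) - 1))"
    using h2 by (intro boolD2) auto
  then show ?thesis unfolding c cc_ind av2 by (simp add: algebra_simps)
qed

lemma boolA3: "\<lbrakk>\<not>(b0 \<and> b1); \<not>(b1 \<and> b2); \<not>(b0 \<and> b2)\<rbrakk> \<Longrightarrow> ind b0 + ind b1 + ind b2 \<le> 1"
  unfolding ind_def by (cases b0; cases b1; cases b2; simp)

lemma alphaloc3: assumes "S \<subseteq> gadget_verts 3" "\<forall>i\<in>S. \<forall>j\<in>S. \<not> gadget_adj 3 t i j"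
  shows "card S \<le> 1"
proof -
  have c: "int (card S) = (\<Sum>i\<in>{0,1,2}. ind (i\<in>S))"
    using assms(1) by (intro card_sub_sum) (auto simp: gv3)
  have e: "\<forall>(i,j)\<in>set(gadget_edge_list 3 t). \<not>(i\<in>S \<and> j\<in>S)" using indep_edges[OF assms(2)] .
  have e2: "\<not>(0\<in>S \<and> 1\<in>S) \<and> \<not>(1\<in>S \<and> 2\<in>S) \<and> \<not>(0\<in>S \<and> 2\<in>S)" using e by (simp add: gel3)
  have "ind (0\<in>S) + ind (1\<in>S) + ind (2\<in>S) \<le> 1"
    using e2 by (intro boolA3) auto
  then have "int (card S) \<le> 1" unfolding c by (simp add: algebra_simps)
  then show ?thesis by simp
qed

lemma boolD3: "\<lbrakk>b0 \<longrightarrow> ind b1 + ind b2 + ind x0 \<le> 1; b1 \<longrightarrow> ind b2 + ind b0 + ind x1 \<le> 1; b2 \<longrightarrow> ind b1 + ind b0 + ind x2 \<le> 1\<rbrakk> \<Longrightarrow> 3 * (ind b0 + ind b1 + ind b2) \<le> 5 + ((2 * ind b0 - ind (b0 \<and> x0) - 1) + (2 * ind b1 - ind (b1 \<and> x1) - 1) + (2 * ind b2 - ind (b2 \<and> x2) - 1))"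
  unfolding ind_def by (cases b0; cases b1; cases b2; cases x0; cases x1; cases x2; simp)

lemma dissloc3: assumes "S \<subseteq> gadget_verts 3" "X \<subseteq> attach_verts 3"
   "\<forall>i\<in>S. card {j\<in>S. gadget_adj 3 t i j} + (if i\<in>X then 1 else 0) \<le> 1"
  shows "3 * int (card S) \<le> 5 + (\<Sum>i\<in>attach_verts 3. cc S X i)"
proof -
  have c: "int (card S) = (\<Sum>i\<in>{0,1,2}. ind (i\<in>S))"
    using assms(1) by (intro card_sub_sum) (auto simp: gv3)
  have h: "\<forall>i\<in>{0,1,2}. i\<in>S \<longrightarrow> (\<Sum>j\<in>set(nbl 3 t i). ind (j \<in> S)) + (if i \<in> attach_verts 3 then ind (i\<in>X) else 0) \<le> 1"
  proof (intro ballI impI)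
    fix i assume "i \<in> {0,1,2}" "i \<in> S"
    then have "int (card {j\<in>S. gadget_adj 3 t i j}) + ind (i\<in>X) \<le> 1" using assms(3) by (force simp: ind_def split: if_splits)
    moreover have "i \<notin> attach_verts 3 \<Longrightarrow> ind (i\<in>X) = 0" using assms(2) by (auto simp: ind_def)
    ultimately show "(\<Sum>j\<in>set(nbl 3 t i). ind (j \<in> S)) + (if i \<in> attach_verts 3 then ind (i\<in>X) else 0) \<le> 1"
      using ind_nonneg[of "i\<in>X"] by (auto simp: nbcard split: if_splits)
  qed
  then have h2: "(0\<in>S \<longrightarrow> ind (1\<in>S) + ind (2\<in>S) + ind (0\<in>X) \<le> 1) \<and> (1\<in>S \<longrightarrow> ind (2\<in>S) + ind (0\<in>S) + ind (1\<in>X) \<le> 1) \<and> (2\<in>S \<longrightarrow> ind (1\<in>S) + ind (0\<in>S) + ind (2\<in>X) \<le> 1)"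
    by (simp add: nbl_def gel3 av3 add_ac)
  have "3 * (ind (0\<in>S) + ind (1\<in>S) + ind (2\<in>S)) \<le> 5 + ((2 * ind (0\<in>S) - ind (0\<in>S \<and> 0\<in>X) - 1) + (2 * ind (1\<in>S) - ind (1\<in>S \<and> 1\<in>X) - 1) + (2 * ind (2\<in>S) - ind (2\<in>S \<and> 2\<in>X) - 1))"
    using h2 by (intro boolD3) auto
  then show ?thesis unfolding c cc_ind av3 by (simp add: algebra_simps)
qed


lemma adj_in_gv: "gadget_adj d t i j \<Longrightarrow> i \<in> gadget_verts d \<and> j \<in> gadget_verts d"
  by (cases t) (auto simp: gadget_adj_def gadget_edge_list_def gadget_verts_def split: if_splits)

lemma adj_irrefl: "\<not> gadget_adj d t i i"
  by (cases t) (auto simp: gadget_adj_def gadget_edge_list_def split: if_splits)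

lemma adj_sym: "gadget_adj d t i j \<Longrightarrow> gadget_adj d t j i"
  by (auto simp: gadget_adj_def)

lemma att_sub_gv: "attach_verts d \<subseteq> gadget_verts d"
  by (auto simp: attach_verts_def gadget_verts_def)

lemma zero_gv: "d \<in> {1,2,3} \<Longrightarrow> 0 \<in> gadget_verts d"
  by (auto simp: gadget_verts_def)

lemma gconn1: "\<forall>i\<in>gadget_verts 1. (gadget_adj 1 t)\<^sup>*\<^sup>* 0 i"
proof -
  let ?R = "gadget_adj 1 t"
  have a: "?R 0 1" "?R 1 3" "?R 3 4" "?R 4 5" "?R 5 8" "?R 8 7" "?R 7 6" "?R 6 2"
    by (cases t; simp add: gadget_adj_def gel1n gel1)+
  have p1: "?R\<^sup>*\<^sup>* 0 1" using a(1) by blast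
  have p3: "?R\<^sup>*\<^sup>* 0 3" using p1 a(2) by (rule rtranclp.rtrancl_into_rtrancl)
  have p4: "?R\<^sup>*\<^sup>* 0 4" using p3 a(3) by (rule rtranclp.rtrancl_into_rtrancl)
  have p5: "?R\<^sup>*\<^sup>* 0 5" using p4 a(4) by (rule rtranclp.rtrancl_into_rtrancl)
  have p8: "?R\<^sup>*\<^sup>* 0 8" using p5 a(5) by (rule rtranclp.rtrancl_into_rtrancl)
  have p7: "?R\<^sup>*\<^sup>* 0 7" using p8 a(6) by (rule rtranclp.rtrancl_into_rtrancl)
  have p6: "?R\<^sup>*\<^sup>* 0 6" using p7 a(7) by (rule rtranclp.rtrancl_into_rtrancl)
  have p2: "?R\<^sup>*\<^sup>* 0 2" using p6 a(8) by (rule rtranclp.rtrancl_into_rtrancl)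
  show ?thesis unfolding gv1 using p1 p2 p3 p4 p5 p6 p7 p8 by auto
qed

lemma gconn2: "\<forall>i\<in>gadget_verts 2. (gadget_adj 2 t)\<^sup>*\<^sup>* 0 i"
proof -
  let ?R = "gadget_adj 2 t"
  have a: "?R 0 2" "?R 2 1" "?R 0 3" "?R 0 4" "?R 4 5"
    by (simp_all add: gadget_adj_def gel2)
  have p2: "?R\<^sup>*\<^sup>* 0 2" using a(1) by blast
  have p1: "?R\<^sup>*\<^sup>* 0 1" using p2 a(2) by (rule rtranclp.rtrancl_into_rtrancl)
  have p3: "?R\<^sup>*\<^sup>* 0 3" using a(3) by blast
  have p4: "?R\<^sup>*\<^sup>* 0 4" using a(4) by blast
  have p5: "?R\<^sup>*\<^sup>* 0 5" using p4 a(5) by (rule rtranclp.rtrancl_into_rtrancl)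
  show ?thesis unfolding gv2 using p1 p2 p3 p4 p5 by auto
qed

lemma gconn3: "\<forall>i\<in>gadget_verts 3. (gadget_adj 3 t)\<^sup>*\<^sup>* 0 i"
proof -
  let ?R = "gadget_adj 3 t"
  have a: "?R 0 1" "?R 0 2" by (simp_all add: gadget_adj_def gel3)
  then show ?thesis unfolding gv3 by auto
qed

lemma gconn: "d \<in> {1,2,3} \<Longrightarrow> i \<in> gadget_verts d \<Longrightarrow> (gadget_adj d t)\<^sup>*\<^sup>* 0 i"
  using gconn1 gconn2 gconn3 by auto

definition Iset :: "nat \<Rightarrow> nat set" where "Iset d = (if d = 1 then {1,2,5} else {0,1})"

lemma Iset1: "Iset 1 \<subseteq> gadget_verts 1 \<and> Iset 1 \<inter> attach_verts 1 = {} \<and>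
   card (Iset 1) = 3 \<and> (\<forall>i\<in>Iset 1. \<forall>j\<in>Iset 1. \<not> gadget_adj 1 t i j)"
  unfolding Iset_def gv1 av1 by (cases t) (simp_all add: gadget_adj_def gel1n gel1)
lemma Iset2: "Iset 2 \<subseteq> gadget_verts 2 \<and> Iset 2 \<inter> attach_verts 2 = {} \<and>
   card (Iset 2) = 2 \<and> (\<forall>i\<in>Iset 2. \<forall>j\<in>Iset 2. \<not> gadget_adj 2 t i j)"
  unfolding Iset_def gv2 av2 by (simp add: gadget_adj_def gel2)

definition core :: "nat \<Rightarrow> nat set" where "core d = (if d = 1 then {3,4,6,7} else if d = 2 then {2,3} else {})"

lemma core_ok: "core d \<subseteq> gadget_verts d \<and> core d \<inter> attach_verts d = {} \<and>
   card (core d) = (if d = 1 then 4 else if d = 2 then 2 else 0)"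
  by (auto simp: core_def gadget_verts_def attach_verts_def)

lemma nbcardY: "card {j\<in>Y. gadget_adj d t i j} = card (Y \<inter> set (nbl d t i))"
  by (rule arg_cong[where f=card]) (auto simp: adj_nbl)

lemma sub1: "A \<subseteq> {a::nat} \<Longrightarrow> card A = 1 \<Longrightarrow> A = {a}"
  by (auto simp: card_1_singleton_iff)
lemma sub2: "A \<subseteq> {a,b::nat} \<Longrightarrow> card A = 1 \<Longrightarrow> A = {a} \<or> A = {b}"
  by (auto simp: card_1_singleton_iff)
lemma sub2b: "A \<subseteq> {a,b::nat} \<Longrightarrow> card A = 2 \<Longrightarrow> A = {a,b}"
  using card_seteq[of "{a,b}" A] by (simp add: card_insert_if split: if_splits)
lemma sub3: "A \<subseteq> {a,b,c::nat} \<Longrightarrow> card A = 1 \<Longrightarrow> A = {a} \<or> A = {b} \<or> A = {c}"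
  by (auto simp: card_1_singleton_iff)
lemma sub3b: "A \<subseteq> {a,b,c::nat} \<Longrightarrow> card A = 2 \<Longrightarrow> A = {a,b} \<or> A = {a,c} \<or> A = {b,c}"
  by (auto simp: card_2_iff)

lemma dconstr: assumes "d \<in> {1,2,3}" "A \<subseteq> attach_verts d" "m \<Longrightarrow> card A = 1" "\<not> m \<Longrightarrow> card A = 2 \<and> d \<noteq> 1"
  shows "\<forall>i\<in>core d \<union> A. card {j\<in>core d \<union> A. gadget_adj d t i j} + (if m \<and> i\<in>A then 1 else 0) \<le> 1"
proof (cases m)
  case True
  then have cA: "card A = 1" using assms(3) by blast
  consider "d = 1" | "d = 2" | "d = 3" using assms(1) by blast
  then show ?thesis
  proof cases
    case 1
    then have "A = {0}" using sub1[of A 0] assms(2) cA by (simp add: av1 av1s)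
    then show ?thesis unfolding nbcardY using 1 True by (cases t) (simp_all add: core_def nbl_def gel1 gel1n)
  next
    case 2
    then have "A = {4} \<or> A = {5}" using sub2[of A 4 5] assms(2) cA by (simp add: av2)
    then show ?thesis unfolding nbcardY using 2 True by (elim disjE) (simp_all add: core_def nbl_def gel2)
  next
    case 3
    then have "A = {0} \<or> A = {1} \<or> A = {2}" using sub3[of A 0 1 2] assms(2) cA by (simp add: av3)
    then show ?thesis unfolding nbcardY using 3 True by (elim disjE) (simp_all add: core_def nbl_def gel3)
  qed
next
  case False
  then have cA: "card A = 2" "d \<noteq> 1" using assms(4) by blast+
  consider "d = 2" | "d = 3" using assms(1) cA(2) by blast
  then show ?thesis
  proof cases
    case 1
    then have "A = {4,5}" using sub2b[of A 4 5] assms(2) cA by (simp add: av2)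
    then show ?thesis unfolding nbcardY using 1 False by (simp add: core_def nbl_def gel2)
  next
    case 2
    then have "A = {0,1} \<or> A = {0,2} \<or> A = {1,2}" using sub3b[of A 0 1 2] assms(2) cA by (simp add: av3)
    then show ?thesis unfolding nbcardY using 2 False by (elim disjE) (simp_all add: core_def nbl_def gel3)
  qed
qed


lemma gdeg: "d \<in> {1,2,3} \<Longrightarrow> i \<in> gadget_verts d \<Longrightarrow>
   card (set (nbl d t i)) + (if i \<in> attach_verts d then 1 else 0) = 3"
proof -
  assume a: "d \<in> {1,2,3}" "i \<in> gadget_verts d"
  then have "d = 1 \<or> d = 2 \<or> d = 3" by auto
  then show ?thesis using gdeg1 gdeg2 gdeg3 a(2) by blast
qed

lemma gv_sub: "gadget_verts d \<subseteq> {0..8}" by (auto simp: gadget_verts_def)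

locale hk =
  fixes k :: nat and V :: "'v set" and E :: "'e set" and ends :: "'e \<Rightarrow> 'v set"
    and att :: "'v \<Rightarrow> 'e \<Rightarrow> nat" and gtype :: "'v \<Rightarrow> bool" and M :: "'e set" and tl :: "'e \<Rightarrow> 'v"
  assumes kpos: "k > 0" and mg: "multigraph V E ends" and mc: "m_connected V E ends"
   and dle: "\<forall>v\<in>V. mdeg E ends v \<le> 3"
   and cnt: "3 * ncount V E ends 1 + 2 * ncount V E ends 2 + ncount V E ends 3 = 6 * k"
   and im: "induced_matching E ends M" and cM: "card M = k"
   and cov: "\<forall>v\<in>V. mdeg E ends v = 1 \<longrightarrow> v \<in> \<Union>(ends ` M)"
   and tl1: "\<forall>e\<in>E - M. tl e \<in> ends e"
   and tl2: "\<forall>v\<in>V - \<Union>(ends ` M). card {e\<in>E - M. tl e = v} = 2"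
   and va: "valid_attach V E ends att"
begin

abbreviation "deg w \<equiv> mdeg E ends w"
definition "inc w = {e\<in>E. w \<in> ends e}"
abbreviation "VM \<equiv> \<Union>(ends ` M)"
abbreviation "n d \<equiv> ncount V E ends d"
abbreviation "GVs \<equiv> GV V E ends"
abbreviation "GAs \<equiv> GA V E ends att gtype"

lemma finV: "finite V" and finE: "finite E" using mg by (auto simp: multigraph_def)
lemma ends_sub: "e \<in> E \<Longrightarrow> ends e \<subseteq> V" using mg by (auto simp: multigraph_def)
lemma ends2: "e \<in> E \<Longrightarrow> card (ends e) = 2" using mg by (auto simp: multigraph_def)
lemma fin_inc: "finite (inc w)" using finE by (simp add: inc_def)
lemma deg_inc: "deg w = card (inc w)" by (simp add: mdeg_def inc_def)
lemma inc_E: "e \<in> inc w \<longleftrightarrow> e \<in> E \<and> w \<in> ends e" by (simp add: inc_def)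

definition "oth e w = (THE v. v \<in> ends e \<and> v \<noteq> w)"

lemma oth: assumes "e \<in> E" "w \<in> ends e" shows "ends e = {w, oth e w}" "oth e w \<noteq> w" "oth e w \<in> V"
proof -
  obtain a b where ab: "ends e = {a,b}" "a \<noteq> b" using ends2[OF assms(1)] by (auto simp: card_2_iff)
  have "\<exists>!v. v \<in> ends e \<and> v \<noteq> w" using ab assms(2) by auto
  then have o: "oth e w \<in> ends e \<and> oth e w \<noteq> w" unfolding oth_def by (rule theI')
  then show "ends e = {w, oth e w}" using ab assms(2) by auto
  show "oth e w \<noteq> w" using o by simp
  show "oth e w \<in> V" using o ends_sub[OF assms(1)] by auto
qed

lemma oth_eq: assumes "e \<in> E" "ends e = {w, v}" "v \<noteq> w" shows "oth e w = v"
  using oth[OF assms(1)] assms(2,3) by (metis doubleton_eq_iff insertI1)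

lemma oth_oth: assumes "e \<in> E" "w \<in> ends e" shows "oth e (oth e w) = w"
  using oth[OF assms] oth_eq[OF assms(1)] by (metis insert_commute)

lemma att_bij: "w \<in> V \<Longrightarrow> bij_betw (att w) (inc w) (attach_verts (deg w))"
  using va by (simp add: valid_attach_def inc_def)
lemma att_in: "w \<in> V \<Longrightarrow> e \<in> inc w \<Longrightarrow> att w e \<in> attach_verts (deg w)"
  using att_bij bij_betwE by blast
lemma att_inj: "w \<in> V \<Longrightarrow> e \<in> inc w \<Longrightarrow> e' \<in> inc w \<Longrightarrow> att w e = att w e' \<Longrightarrow> e = e'"
  using att_bij[of w] by (auto simp: bij_betw_def inj_on_def)
lemma att_surj: assumes "w \<in> V" "i \<in> attach_verts (deg w)" shows "\<exists>e\<in>inc w. att w e = i"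
proof -
  have "i \<in> att w ` inc w" using att_bij[OF assms(1)] assms(2) bij_betw_imp_surj_on by metis
  then show ?thesis by blast
qed

lemma deg_pos: assumes w: "w \<in> V" shows "deg w \<ge> 1"
proof (rule ccontr)
  assume "\<not> 1 \<le> deg w"
  then have "card (inc w) = 0" using deg_inc[of w] by simp
  then have i0: "inc w = {}" using fin_inc[of w] by simp
  have "V \<subseteq> {w}"
  proof
    fix v assume v: "v \<in> V"
    have "(\<lambda>x y. \<exists>e\<in>E. ends e = {x, y})\<^sup>*\<^sup>* w v" using mc w v by (simp add: m_connected_def)
    then show "v \<in> {w}"
    proof (cases rule: converse_rtranclpE)
      case base then show ?thesis by simp
    next
      case (step y)
      then obtain e where "e \<in> E" "ends e = {w,y}" by blast
      then have "e \<in> inc w" by (simp add: inc_def)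
      with i0 show ?thesis by simp
    qed
  qed
  then have "V = {w}" using w by auto
  then have "n 1 = 0" "n 2 = 0" "n 3 = 0" using \<open>\<not> 1 \<le> deg w\<close> by (auto simp: ncount_def)
  with cnt kpos show False by simp
qed

lemma deg123: "w \<in> V \<Longrightarrow> deg w \<in> {1,2,3}" using deg_pos dle by force

lemma GV_iff: "(w,i) \<in> GVs \<longleftrightarrow> w \<in> V \<and> i \<in> gadget_verts (deg w)" by (simp add: GV_def)
lemma finGV: "finite GVs"
proof -
  have "GVs \<subseteq> V \<times> {0..8}" using gv_sub by (auto simp: GV_def)
  then show ?thesis using finV finite_subset by blast
qed
lemma att_GV: "w \<in> V \<Longrightarrow> e \<in> inc w \<Longrightarrow> (w, att w e) \<in> GVs"
  using att_in att_sub_gv by (auto simp: GV_def)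

definition "extn w i = {(oth e w, att (oth e w) e) | e. e \<in> inc w \<and> att w e = i}"

lemma extn_prop: assumes "w \<in> V" "q \<in> extn w i" shows "fst q \<noteq> w" "q \<in> GVs"
proof -
  obtain e where e: "e \<in> inc w" "att w e = i" "q = (oth e w, att (oth e w) e)" using assms(2) by (auto simp: extn_def)
  have eE: "e \<in> E" "w \<in> ends e" using e(1) by (auto simp: inc_E)
  show "fst q \<noteq> w" using e(3) oth[OF eE] by simp
  have "e \<in> inc (oth e w)" using oth[OF eE] eE by (auto simp: inc_E)
  then show "q \<in> GVs" using e(3) att_GV oth[OF eE] by simp
qed

lemma extn_single: assumes "w \<in> V" "e \<in> inc w" shows "extn w (att w e) = {(oth e w, att (oth e w) e)}"
  using assms(2) by (auto simp: extn_def dest: att_inj[OF assms(1) _ assms(2)])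

lemma extn_empty: assumes "w \<in> V" "i \<notin> attach_verts (deg w)" shows "extn w i = {}"
  using att_in[OF assms(1)] assms(2) by (auto simp: extn_def)

lemma card_extn: assumes "w \<in> V" shows "card (extn w i) = (if i \<in> attach_verts (deg w) then 1 else 0)"
proof (cases "i \<in> attach_verts (deg w)")
  case True
  then obtain e where "e \<in> inc w" "att w e = i" using att_surj[OF assms] by blast
  then show ?thesis using extn_single[OF assms] True by auto
qed (simp add: extn_empty[OF assms])

lemma GA_iff: assumes "w \<in> V"
  shows "GAs (w,i) q \<longleftrightarrow> (fst q = w \<and> gadget_adj (deg w) (gtype w) i (snd q)) \<or> q \<in> extn w i"
proof -
  have "(\<exists>e\<in>E. ends e = {w, fst q} \<and> w \<noteq> fst q \<and> att w e = i \<and> att (fst q) e = snd q) \<longleftrightarrow> q \<in> extn w i"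
  proof
    assume "\<exists>e\<in>E. ends e = {w, fst q} \<and> w \<noteq> fst q \<and> att w e = i \<and> att (fst q) e = snd q"
    then obtain e where e: "e \<in> E" "ends e = {w, fst q}" "w \<noteq> fst q" "att w e = i" "att (fst q) e = snd q" by blast
    have "oth e w = fst q" using oth_eq[OF e(1) e(2)] e(3) by simp
    moreover have "e \<in> inc w" using e by (simp add: inc_E)
    ultimately show "q \<in> extn w i" using e unfolding extn_def by (intro CollectI exI[of _ e]) (auto simp: prod_eq_iff)
  next
    assume "q \<in> extn w i"
    then obtain e where e: "e \<in> inc w" "att w e = i" "q = (oth e w, att (oth e w) e)" by (auto simp: extn_def)
    have eE: "e \<in> E" "w \<in> ends e" using e(1) by (auto simp: inc_E)
    show "\<exists>e\<in>E. ends e = {w, fst q} \<and> w \<noteq> fst q \<and> att w e = i \<and> att (fst q) e = snd q"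
      using eE oth[OF eE] e by (intro bexI[of _ e]) auto
  qed
  then show ?thesis by (auto simp: GA_def)
qed

lemma nbhd: assumes "w \<in> V"
  shows "{q\<in>GVs. GAs (w,i) q} = (\<lambda>j. (w,j)) ` set (nbl (deg w) (gtype w) i) \<union> extn w i"
proof
  show "{q\<in>GVs. GAs (w,i) q} \<subseteq> (\<lambda>j. (w,j)) ` set (nbl (deg w) (gtype w) i) \<union> extn w i"
  proof
    fix q assume "q \<in> {q\<in>GVs. GAs (w,i) q}"
    then have "(fst q = w \<and> gadget_adj (deg w) (gtype w) i (snd q)) \<or> q \<in> extn w i" using GA_iff[OF assms] by auto
    then show "q \<in> (\<lambda>j. (w,j)) ` set (nbl (deg w) (gtype w) i) \<union> extn w i"
      by (auto simp: adj_nbl image_iff prod_eq_iff)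
  qed
  show "(\<lambda>j. (w,j)) ` set (nbl (deg w) (gtype w) i) \<union> extn w i \<subseteq> {q\<in>GVs. GAs (w,i) q}"
  proof
    fix q assume q: "q \<in> (\<lambda>j. (w,j)) ` set (nbl (deg w) (gtype w) i) \<union> extn w i"
    show "q \<in> {q\<in>GVs. GAs (w,i) q}"
    proof (cases "q \<in> extn w i")
      case True then show ?thesis using extn_prop[OF assms] GA_iff[OF assms] by auto
    next
      case False
      then obtain j where j: "q = (w,j)" "gadget_adj (deg w) (gtype w) i j" using q by (auto simp: adj_nbl)
      then have "j \<in> gadget_verts (deg w)" using adj_in_gv by blast
      then show ?thesis using j assms GA_iff[OF assms] by (auto simp: GV_def)
    qed
  qed
qed

lemma cubic: "g_cubic GVs GAs"
  unfolding g_cubic_def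
proof
  fix p assume p: "p \<in> GVs"
  obtain w i where wi: "p = (w,i)" by force
  have w: "w \<in> V" "i \<in> gadget_verts (deg w)" using p wi by (auto simp: GV_def)
  have disj: "(\<lambda>j. (w,j)) ` set (nbl (deg w) (gtype w) i) \<inter> extn w i = {}" by (force dest: extn_prop(1)[OF w(1)])
  have "card {q\<in>GVs. GAs p q} = card ((\<lambda>j. (w,j)) ` set (nbl (deg w) (gtype w) i)) + card (extn w i)"
    unfolding wi nbhd[OF w(1)] using disj by (intro card_Un_disjoint) (auto intro: finite_subset[OF _ finGV] extn_prop[OF w(1)])
  also have "\<dots> = card (set (nbl (deg w) (gtype w) i)) + (if i \<in> attach_verts (deg w) then 1 else 0)"
    by (simp add: card_image inj_on_def card_extn[OF w(1)])
  also have "\<dots> = 3" using gdeg deg123 w by blast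
  finally show "card {q\<in>GVs. GAs p q} = 3" .
qed

end

context hk begin

abbreviation "Rg \<equiv> \<lambda>x y. x \<in> GVs \<and> y \<in> GVs \<and> GAs x y"

lemma GA_sym: "GAs p q \<Longrightarrow> GAs q p"
  by (auto simp: GA_def adj_sym insert_commute)

lemma rt_sym: "Rg\<^sup>*\<^sup>* p q \<Longrightarrow> Rg\<^sup>*\<^sup>* q p"
proof (induction rule: rtranclp_induct)
  case base then show ?case by simp
next
  case (step y z)
  then have "Rg z y" using GA_sym by blast
  then show ?case using step(3) by (rule converse_rtranclp_into_rtranclp)
qed

lemma lift: assumes "w \<in> V" "(gadget_adj (deg w) (gtype w))\<^sup>*\<^sup>* i j"
  shows "Rg\<^sup>*\<^sup>* (w,i) (w,j)"
  using assms(2)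
proof (induction rule: rtranclp_induct)
  case base then show ?case by simp
next
  case (step y z)
  have "y \<in> gadget_verts (deg w)" "z \<in> gadget_verts (deg w)" using adj_in_gv[OF step(2)] by auto
  then have "Rg (w,y) (w,z)" using step(2) assms(1) by (auto simp: GV_def GA_def)
  with step(3) show ?case by (rule rtranclp.rtrancl_into_rtrancl)
qed

lemma inner: assumes "w \<in> V" "i \<in> gadget_verts (deg w)" "j \<in> gadget_verts (deg w)"
  shows "Rg\<^sup>*\<^sup>* (w,i) (w,j)"
proof -
  have d: "deg w \<in> {1,2,3}" using deg123 assms(1) by blast
  have "Rg\<^sup>*\<^sup>* (w,0) (w,i)" using lift[OF assms(1) gconn[OF d assms(2)]] .
  then have "Rg\<^sup>*\<^sup>* (w,i) (w,0)" by (rule rt_sym)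
  moreover have "Rg\<^sup>*\<^sup>* (w,0) (w,j)" using lift[OF assms(1) gconn[OF d assms(3)]] .
  ultimately show ?thesis by (rule rtranclp_trans)
qed

lemma ext_step: assumes "e \<in> E" "x \<in> ends e"
  shows "Rg (x, att x e) (oth e x, att (oth e x) e)"
proof -
  have x: "x \<in> V" "e \<in> inc x" using assms ends_sub by (auto simp: inc_E)
  have "e \<in> inc (oth e x)" using oth[OF assms] assms by (auto simp: inc_E)
  then have "(oth e x, att (oth e x) e) \<in> extn x (att x e)" using x by (auto simp: extn_def)
  then show ?thesis using GA_iff[OF x(1)] att_GV[OF x] extn_prop[OF x(1)] by blast
qed

lemma Hpath: assumes "(\<lambda>x y. \<exists>e\<in>E. ends e = {x, y})\<^sup>*\<^sup>* u v" shows "Rg\<^sup>*\<^sup>* (u,0) (v,0)"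
  using assms
proof (induction rule: rtranclp_induct)
  case base then show ?case by simp
next
  case (step x y)
  then obtain e where e: "e \<in> E" "ends e = {x,y}" by blast
  have xe: "x \<in> ends e" and xV: "x \<in> V" and yV: "y \<in> V" using e ends_sub by auto
  have "x \<noteq> y" using ends2[OF e(1)] e(2) by auto
  then have o: "oth e x = y" using oth_eq[OF e(1) e(2)] by simp
  have ix: "e \<in> inc x" using e by (simp add: inc_E)
  have iy: "e \<in> inc y" using e by (simp add: inc_E)
  have d: "deg x \<in> {1,2,3}" "deg y \<in> {1,2,3}" using deg123 xV yV by auto
  have a: "Rg\<^sup>*\<^sup>* (x,0) (x, att x e)" using inner[OF xV zero_gv[OF d(1)]] att_in[OF xV ix] att_sub_gv by blast
  have b: "Rg (x, att x e) (y, att y e)" using ext_step[OF e(1) xe] o by simp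
  have c: "Rg\<^sup>*\<^sup>* (y, att y e) (y,0)" using inner[OF yV _ zero_gv[OF d(2)]] att_in[OF yV iy] att_sub_gv by blast
  show ?case using rtranclp_trans[OF rtranclp.rtrancl_into_rtrancl[OF rtranclp_trans[OF step(3) a] b] c] .
qed

lemma connected: "g_connected GVs GAs"
  unfolding g_connected_def
proof
  obtain w where w: "w \<in> V" using mc by (auto simp: m_connected_def)
  then have "(w,0) \<in> GVs" using zero_gv deg123 by (auto simp: GV_def)
  then show "GVs \<noteq> {}" by blast
  show "\<forall>u\<in>GVs. \<forall>v\<in>GVs. Rg\<^sup>*\<^sup>* u v"
  proof (intro ballI)
    fix p q assume p: "p \<in> GVs" and q: "q \<in> GVs"
    obtain u i where pu: "p = (u,i)" by force
    obtain v j where qv: "q = (v,j)" by force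
    have u: "u \<in> V" "i \<in> gadget_verts (deg u)" using p pu by (auto simp: GV_def)
    have v: "v \<in> V" "j \<in> gadget_verts (deg v)" using q qv by (auto simp: GV_def)
    have a: "Rg\<^sup>*\<^sup>* (u,i) (u,0)" using inner[OF u(1) u(2) zero_gv] deg123[OF u(1)] by blast
    have b: "Rg\<^sup>*\<^sup>* (u,0) (v,0)" using Hpath mc u(1) v(1) by (simp add: m_connected_def)
    have c: "Rg\<^sup>*\<^sup>* (v,0) (v,j)" using inner[OF v(1) zero_gv v(2)] deg123[OF v(1)] by blast
    show "Rg\<^sup>*\<^sup>* p q" unfolding pu qv using rtranclp_trans[OF rtranclp_trans[OF a b] c] .
  qed
qed

end


lemma Max_card_eq: assumes "finite A" "\<And>S. P S \<Longrightarrow> S \<subseteq> A" "P S0" "card S0 = m" "\<And>S. P S \<Longrightarrow> card S \<le> m"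
  shows "Max {card S | S. P S} = m"
proof (rule Max_eqI)
  have "{card S | S. P S} \<subseteq> {0..card A}" using assms(1,2) card_mono by fastforce
  then show "finite {card S | S. P S}" using finite_subset by blast
  show "\<And>y. y \<in> {card S | S. P S} \<Longrightarrow> y \<le> m" using assms(5) by blast
  show "m \<in> {card S | S. P S}" using assms(3,4) by blast
qed

context hk begin

lemma deg_sum: "(\<Sum>w\<in>V. f (deg w)) = of_nat (n 1) * f 1 + of_nat (n 2) * f 2 + of_nat (n 3) * (f 3 :: 'a :: comm_semiring_1)"
proof -
  let ?A = "\<lambda>d. {w\<in>V. deg w = d}"
  have V: "V = ?A 1 \<union> (?A 2 \<union> ?A 3)" using deg123 by auto
  have fA: "finite (?A d)" for d using finV by simp
  have s: "(\<Sum>w\<in>?A d. f (deg w)) = of_nat (n d) * f d" for d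
  proof -
    have "(\<Sum>w\<in>?A d. f (deg w)) = (\<Sum>w\<in>?A d. f d)" by (rule sum.cong) auto
    then show ?thesis by (simp add: ncount_def)
  qed
  have "(\<Sum>w\<in>V. f (deg w)) = (\<Sum>w\<in>?A 1. f (deg w)) + ((\<Sum>w\<in>?A 2. f (deg w)) + (\<Sum>w\<in>?A 3. f (deg w)))"
    apply (subst V)
    apply (subst sum.union_disjoint)
       apply (auto simp: fA)[3]
    apply (subst sum.union_disjoint)
       apply (auto simp: fA)
    done
  then show ?thesis using s by (simp add: add.assoc)
qed

lemma card_split: assumes "S \<subseteq> GVs" shows "card S = (\<Sum>w\<in>V. card {i. (w,i) \<in> S})"
proof -
  have "S = Sigma V (\<lambda>w. {i. (w,i) \<in> S})" using assms by (auto simp: GV_def)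
  moreover have "finite {i. (w,i) \<in> S}" for w
  proof -
    have "{i. (w,i) \<in> S} \<subseteq> {0..8}" using assms gv_sub by (auto simp: GV_def)
    then show ?thesis using finite_subset by blast
  qed
  ultimately show ?thesis using finV by (metis card_SigmaI)
qed

lemma M_sub: "M \<subseteq> E" using im by (simp add: induced_matching_def)
lemma M_disj: "e \<in> M \<Longrightarrow> e' \<in> M \<Longrightarrow> e \<noteq> e' \<Longrightarrow> ends e \<inter> ends e' = {}"
  using im by (simp add: induced_matching_def)
lemma M_uniq: "e \<in> M \<Longrightarrow> e' \<in> M \<Longrightarrow> v \<in> ends e \<Longrightarrow> v \<in> ends e' \<Longrightarrow> e = e'"
  using M_disj by blast
lemma finM: "finite M" using M_sub finE finite_subset by blast

lemma VM_sub: "VM \<subseteq> V" using M_sub ends_sub by blast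

lemma card_VM: "card VM = 2 * k"
proof -
  have "card VM = (\<Sum>e\<in>M. card (ends e))"
  proof (rule card_UN_disjoint)
    show "finite M" by (rule finM)
    show "\<forall>i\<in>M. finite (ends i)"
    proof
      fix i assume "i \<in> M"
      then have "ends i \<subseteq> V" using M_sub ends_sub by blast
      then show "finite (ends i)" using finV finite_subset by blast
    qed
    show "\<forall>i\<in>M. \<forall>j\<in>M. i \<noteq> j \<longrightarrow> ends i \<inter> ends j = {}" using M_disj by blast
  qed
  also have "\<dots> = (\<Sum>e\<in>M. 2)" using ends2 M_sub by (intro sum.cong) auto
  finally show ?thesis using cM by simp
qed

lemma handshake: "(\<Sum>v\<in>V. deg v) = 2 * card E"
proof -
  have "(\<Sum>v\<in>V. deg v) = (\<Sum>v\<in>V. \<Sum>e\<in>{e. e \<in> E \<and> v \<in> ends e}. (1::nat))" by (simp add: mdeg_def)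
  also have "\<dots> = (\<Sum>e\<in>E. \<Sum>v\<in>{v. v \<in> V \<and> v \<in> ends e}. (1::nat))"
    by (rule sum.swap_restrict[OF finV finE])
  also have "\<dots> = (\<Sum>e\<in>E. 2)"
  proof (rule sum.cong)
    fix e assume e: "e \<in> E"
    then have "{v. v \<in> V \<and> v \<in> ends e} = ends e" using ends_sub by auto
    then show "(\<Sum>v\<in>{v. v \<in> V \<and> v \<in> ends e}. (1::nat)) = 2" using ends2[OF e] by simp
  qed simp
  finally show ?thesis by simp
qed

abbreviation "out v \<equiv> card {e\<in>E - M. tl e = v}"

lemma out_sum: "(\<Sum>v\<in>V. out v) = card (E - M)"
proof -
  have eq: "E - M = (\<Union>v\<in>V. {e\<in>E - M. tl e = v})" using tl1 ends_sub by fastforce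
  have c: "card (\<Union>v\<in>V. {e\<in>E - M. tl e = v}) = (\<Sum>v\<in>V. out v)"
    by (rule card_UN_disjoint) (use finV finE in auto)
  have "card (E - M) = card (\<Union>v\<in>V. {e\<in>E - M. tl e = v})" by (rule arg_cong[where f=card, OF eq])
  with c show ?thesis by linarith
qed

lemma out0: assumes "v \<in> VM" shows "{e\<in>E - M. tl e = v} = {}"
proof -
  have fVM: "finite VM" using VM_sub finV finite_subset by blast
  have "(\<Sum>v\<in>V. out v) = (\<Sum>v\<in>V - VM. out v) + (\<Sum>v\<in>VM. out v)"
    using sum.subset_diff[OF VM_sub finV] by simp
  also have "(\<Sum>v\<in>V - VM. out v) = (\<Sum>v\<in>V - VM. 2)" using tl2 by (intro sum.cong) auto
  finally have e1: "card (E - M) = 2 * card (V - VM) + (\<Sum>v\<in>VM. out v)" using out_sum by simp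
  have e2: "card (E - M) + k = card E" using card_Diff_subset[OF finM M_sub] card_mono[OF finE M_sub] cM by simp
  have e3: "card (V - VM) + 2 * k = card V" using card_Diff_subset[OF fVM VM_sub] card_mono[OF finV VM_sub] card_VM by simp
  have e4: "card V = n 1 + n 2 + n 3" using deg_sum[of "\<lambda>_. (1::nat)"] by simp
  have e5: "2 * card E = n 1 + 2 * n 2 + 3 * n 3" using deg_sum[of "\<lambda>d. d"] handshake by simp
  from e1 e2 e3 e4 e5 cnt have "(\<Sum>v\<in>VM. out v) = 0" by linarith
  then have "\<forall>x\<in>VM. out x = 0" by (simp only: sum_eq_0_iff[OF fVM])
  then have "out v = 0" using assms by blast
  then show ?thesis using finE by simp
qed

lemma inc_M_le1: "card (inc w \<inter> M) \<le> 1"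
proof -
  have "\<forall>e\<in>inc w \<inter> M. \<forall>e'\<in>inc w \<inter> M. e = e'" using M_uniq by (auto simp: inc_E)
  moreover have f: "finite (inc w \<inter> M)" using fin_inc by simp
  ultimately show ?thesis using card_le_Suc0_iff_eq[OF f] by simp
qed

lemma ch_ex: assumes w: "w \<in> V" "deg w = 3" shows "\<exists>e. e \<in> inc w \<and> e \<notin> M \<and> tl e \<noteq> w"
proof (cases "w \<in> VM")
  case True
  have "card (inc w) = 3" using w deg_inc by simp
  moreover have "inc w = (inc w - M) \<union> (inc w \<inter> M)" by blast
  then have "card (inc w) \<le> card (inc w - M) + card (inc w \<inter> M)" by (metis card_Un_le)
  ultimately have "card (inc w - M) \<ge> 2" using inc_M_le1[of w] by linarith
  then have "inc w - M \<noteq> {}" by (cases "inc w - M = {}") auto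
  then obtain e where e: "e \<in> inc w - M" by blast
  then have "tl e \<noteq> w" using out0[OF True] by (auto simp: inc_E)
  then show ?thesis using e by blast
next
  case False
  let ?O = "{e\<in>E - M. tl e = w}"
  have "card ?O = 2" using tl2 w False by simp
  moreover have "?O \<subseteq> inc w" using tl1 by (auto simp: inc_E)
  moreover have "card (inc w) = 3" using w deg_inc by simp
  moreover have "finite ?O" using finE by simp
  ultimately have "\<not> inc w \<subseteq> ?O" using card_mono[of ?O "inc w"] by auto
  then obtain e where e: "e \<in> inc w" "e \<notin> ?O" by blast
  have "e \<notin> M" using e(1) False by (auto simp: inc_E)
  then show ?thesis using e by (auto simp: inc_E)
qed

end

context hk begin

definition "Af d = (if d = 1 then 3 else if d = 2 then 2 else (1::nat))"

lemma alphaloc: assumes "w \<in> V" "S \<subseteq> gadget_verts (deg w)" "\<forall>i\<in>S. \<forall>j\<in>S. \<not> gadget_adj (deg w) (gtype w) i j"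
  shows "card S \<le> Af (deg w)"
proof -
  have "deg w = 1 \<or> deg w = 2 \<or> deg w = 3" using deg123[OF assms(1)] by auto
  then show ?thesis
  proof (elim disjE)
    assume d: "deg w = 1"
    show ?thesis
    proof (cases "gtype w")
      case True then show ?thesis using alphaloc1T[of S] assms d by (simp add: Af_def)
    next
      case False then show ?thesis using alphaloc1F[of S] assms d by (simp add: Af_def)
    qed
  next
    assume d: "deg w = 2" then show ?thesis using alphaloc2[of S] assms by (simp add: Af_def)
  next
    assume d: "deg w = 3" then show ?thesis using alphaloc3[of S] assms by (simp add: Af_def)
  qed
qed

lemma sumA: "(\<Sum>w\<in>V. Af (deg w)) = 6 * k"
  using deg_sum[of Af] cnt by (simp add: Af_def)

lemma alpha_ub: assumes "independent_set GVs GAs S" shows "card S \<le> 6 * k"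
proof -
  have S: "S \<subseteq> GVs" "\<forall>u\<in>S. \<forall>v\<in>S. \<not> GAs u v" using assms by (auto simp: independent_set_def)
  have "card S = (\<Sum>w\<in>V. card {i. (w,i) \<in> S})" by (rule card_split[OF S(1)])
  also have "\<dots> \<le> (\<Sum>w\<in>V. Af (deg w))"
  proof (rule sum_mono)
    fix w assume w: "w \<in> V"
    show "card {i. (w,i) \<in> S} \<le> Af (deg w)"
    proof (rule alphaloc[OF w])
      show "{i. (w,i) \<in> S} \<subseteq> gadget_verts (deg w)" using S(1) by (auto simp: GV_def)
      show "\<forall>i\<in>{i. (w,i) \<in> S}. \<forall>j\<in>{i. (w,i) \<in> S}. \<not> gadget_adj (deg w) (gtype w) i j"
      proof (intro ballI)
        fix i j assume "i \<in> {i. (w,i) \<in> S}" "j \<in> {i. (w,i) \<in> S}"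
        then have "\<not> GAs (w,i) (w,j)" using S(2) by blast
        then show "\<not> gadget_adj (deg w) (gtype w) i j" by (simp add: GA_def)
      qed
    qed
  qed
  finally show ?thesis using sumA by simp
qed

definition "ch w = (SOME e. e \<in> inc w \<and> e \<notin> M \<and> tl e \<noteq> w)"
lemma ch: "w \<in> V \<Longrightarrow> deg w = 3 \<Longrightarrow> ch w \<in> inc w \<and> ch w \<notin> M \<and> tl (ch w) \<noteq> w"
  unfolding ch_def using ch_ex by (rule someI_ex) 

definition "Iw w = (if deg w = 3 then {att w (ch w)} else Iset (deg w))"
definition "Ia = {(w,i). w \<in> V \<and> i \<in> Iw w}"

lemma Iw_prop: assumes w: "w \<in> V"
  shows "Iw w \<subseteq> gadget_verts (deg w)" "card (Iw w) = Af (deg w)"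
    "\<forall>i\<in>Iw w. \<forall>j\<in>Iw w. \<not> gadget_adj (deg w) (gtype w) i j"
    "\<forall>i\<in>Iw w. i \<in> attach_verts (deg w) \<longrightarrow> deg w = 3 \<and> i = att w (ch w)"
proof -
  have "deg w = 1 \<or> deg w = 2 \<or> deg w = 3" using deg123[OF assms(1)] by auto
  then have "Iw w \<subseteq> gadget_verts (deg w) \<and> card (Iw w) = Af (deg w) \<and>
    (\<forall>i\<in>Iw w. \<forall>j\<in>Iw w. \<not> gadget_adj (deg w) (gtype w) i j) \<and>
    (\<forall>i\<in>Iw w. i \<in> attach_verts (deg w) \<longrightarrow> deg w = 3 \<and> i = att w (ch w))"
  proof (elim disjE)
    assume d: "deg w = 1"
    then show ?thesis using Iset1[of "gtype w"] by (auto simp: Iw_def Af_def)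
  next
    assume d: "deg w = 2"
    then show ?thesis using Iset2[of "gtype w"] by (auto simp: Iw_def Af_def)
  next
    assume d: "deg w = 3"
    have "att w (ch w) \<in> attach_verts (deg w)" using att_in[OF w] ch[OF w d] by blast
    then show ?thesis using d att_sub_gv[of "deg w"] adj_irrefl by (auto simp: Iw_def Af_def)
  qed
  then show "Iw w \<subseteq> gadget_verts (deg w)" "card (Iw w) = Af (deg w)"
    "\<forall>i\<in>Iw w. \<forall>j\<in>Iw w. \<not> gadget_adj (deg w) (gtype w) i j"
    "\<forall>i\<in>Iw w. i \<in> attach_verts (deg w) \<longrightarrow> deg w = 3 \<and> i = att w (ch w)" by blast+
qed

lemma Ia_indep: "independent_set GVs GAs Ia"
  unfolding independent_set_def
proof (intro conjI ballI)
  show "Ia \<subseteq> GVs" using Iw_prop(1) by (auto simp: Ia_def GV_def)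
  fix p q assume p: "p \<in> Ia" and q: "q \<in> Ia"
  obtain w i where pw: "p = (w,i)" "w \<in> V" "i \<in> Iw w" using p by (auto simp: Ia_def)
  obtain w' j where qw: "q = (w',j)" "w' \<in> V" "j \<in> Iw w'" using q by (auto simp: Ia_def)
  show "\<not> GAs p q"
  proof
    assume "GAs p q"
    then have "(w' = w \<and> gadget_adj (deg w) (gtype w) i j) \<or> q \<in> extn w i" using GA_iff[OF pw(2)] pw qw by simp
    then show False
    proof
      assume "w' = w \<and> gadget_adj (deg w) (gtype w) i j"
      then show False using Iw_prop(3)[OF pw(2)] pw qw by blast
    next
      assume "q \<in> extn w i"
      then obtain e where e: "e \<in> inc w" "att w e = i" "q = (oth e w, att (oth e w) e)" by (auto simp: extn_def)
      have eE: "e \<in> E" "w \<in> ends e" using e(1) by (auto simp: inc_E)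
      have w': "w' = oth e w" "j = att w' e" using e(3) qw(1) by auto
      have ew': "e \<in> inc w'" using w' oth[OF eE] eE by (auto simp: inc_E)
      have "i \<in> attach_verts (deg w)" using att_in[OF pw(2) e(1)] e(2) by simp
      then have d: "deg w = 3" "i = att w (ch w)" using Iw_prop(4)[OF pw(2)] pw(3) by auto
      then have ech: "e = ch w" using att_inj[OF pw(2) e(1), of "ch w"] ch[OF pw(2) d(1)] e(2) by simp
      have "j \<in> attach_verts (deg w')" using att_in[OF qw(2) ew'] w' by simp
      then have d': "deg w' = 3" "j = att w' (ch w')" using Iw_prop(4)[OF qw(2)] qw(3) by auto
      then have ech': "e = ch w'" using att_inj[OF qw(2) ew', of "ch w'"] ch[OF qw(2) d'(1)] w'(2) by simp
      have "tl e \<in> ends e" using tl1 eE ch[OF pw(2) d(1)] ech by blast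
      moreover have t1: "tl e \<noteq> w" using ch[OF pw(2) d(1)] ech by simp
      moreover have t2: "tl e \<noteq> w'" using ch[OF qw(2) d'(1)] ech' by simp
      ultimately show False using oth(1)[OF eE] w'(1) by auto
    qed
  qed
qed

lemma Ia_card: "card Ia = 6 * k"
proof -
  have "Ia \<subseteq> GVs" using Iw_prop(1) by (auto simp: Ia_def GV_def)
  then have "card Ia = (\<Sum>w\<in>V. card {i. (w,i) \<in> Ia})" by (rule card_split)
  also have "\<dots> = (\<Sum>w\<in>V. Af (deg w))"
  proof (rule sum.cong)
    fix w assume w: "w \<in> V"
    then have "{i. (w,i) \<in> Ia} = Iw w" by (auto simp: Ia_def)
    then show "card {i. (w,i) \<in> Ia} = Af (deg w)" using Iw_prop(2)[OF w] by simp
  qed simp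
  finally show ?thesis using sumA by simp
qed

lemma alpha_val: "alpha GVs GAs = 6 * k"
  unfolding alpha_def
proof (rule Max_card_eq[of GVs "independent_set GVs GAs" Ia "6 * k"])
  show "finite GVs" by (rule finGV)
  show "\<And>S. independent_set GVs GAs S \<Longrightarrow> S \<subseteq> GVs" by (simp add: independent_set_def)
  show "independent_set GVs GAs Ia" by (rule Ia_indep)
  show "card Ia = 6 * k" by (rule Ia_card)
  show "\<And>S. independent_set GVs GAs S \<Longrightarrow> card S \<le> 6 * k" by (rule alpha_ub)
qed

end

context hk begin

definition "Bf d = (if d = 1 then 15 else if d = 2 then 10 else (5::int))"

lemma dissloc: assumes "w \<in> V" "S \<subseteq> gadget_verts (deg w)" "X \<subseteq> attach_verts (deg w)"
  "\<forall>i\<in>S. card {j\<in>S. gadget_adj (deg w) (gtype w) i j} + (if i\<in>X then 1 else 0) \<le> 1"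
  shows "3 * int (card S) \<le> Bf (deg w) + (\<Sum>i\<in>attach_verts (deg w). cc S X i)"
proof -
  have "deg w = 1 \<or> deg w = 2 \<or> deg w = 3" using deg123[OF assms(1)] by auto
  then show ?thesis
  proof (elim disjE)
    assume d: "deg w = 1"
    show ?thesis
    proof (cases "gtype w")
      case True then show ?thesis using dissloc1T[of S X] assms d by (simp add: Bf_def)
    next
      case False then show ?thesis using dissloc1F[of S X] assms d by (simp add: Bf_def)
    qed
  next
    assume d: "deg w = 2" then show ?thesis using dissloc2[of S X] assms by (simp add: Bf_def)
  next
    assume d: "deg w = 3" then show ?thesis using dissloc3[of S X] assms by (simp add: Bf_def)
  qed
qed

lemma sumB: "(\<Sum>w\<in>V. Bf (deg w)) = 30 * int k"
proof -
  have "int (3 * n 1 + 2 * n 2 + n 3) = int (6 * k)" using cnt by simp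
  then show ?thesis using deg_sum[of Bf] by (simp add: Bf_def)
qed

definition "chg S w e = (if (w, att w e) \<notin> S then -1 else if (oth e w, att (oth e w) e) \<in> S then 0 else (1::int))"

lemma edge_chg: assumes "e \<in> E" shows "(\<Sum>w\<in>ends e. chg S w e) \<le> 0"
proof -
  obtain w where w: "w \<in> ends e" using ends2[OF assms] by fastforce
  let ?v = "oth e w"
  have o: "ends e = {w, ?v}" "?v \<noteq> w" using oth[OF assms w] by auto
  have oo: "oth e ?v = w" using oth_oth[OF assms w] .
  have "(\<Sum>x\<in>ends e. chg S x e) = chg S w e + chg S ?v e" using o by simp
  then show ?thesis unfolding chg_def oo by (auto split: if_splits)
qed

lemma diss_ub: assumes "dissociation_set GVs GAs S" shows "card S \<le> 10 * k"
proof -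
  have S: "S \<subseteq> GVs" "\<forall>v\<in>S. card {u\<in>S. GAs v u} \<le> 1" using assms by (auto simp: dissociation_set_def)
  have finS: "finite S" using S(1) finGV finite_subset by blast
  define Sw where "Sw w = {i. (w,i) \<in> S}" for w
  define Xw where "Xw w = att w ` {e\<in>inc w. (oth e w, att (oth e w) e) \<in> S}" for w
  have loc: "3 * int (card (Sw w)) \<le> Bf (deg w) + (\<Sum>e\<in>inc w. chg S w e)" if w: "w \<in> V" for w
  proof -
    have Xs: "Xw w \<subseteq> attach_verts (deg w)" using att_in[OF w] by (auto simp: Xw_def)
    have Ss: "Sw w \<subseteq> gadget_verts (deg w)" using S(1) by (auto simp: Sw_def GV_def)
    have hyp: "\<forall>i\<in>Sw w. card {j\<in>Sw w. gadget_adj (deg w) (gtype w) i j} + (if i\<in>Xw w then 1 else 0) \<le> 1"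
    proof
      fix i assume i: "i \<in> Sw w"
      let ?N = "{u\<in>S. GAs (w,i) u}"
      let ?A = "(\<lambda>j. (w,j)) ` {j\<in>Sw w. gadget_adj (deg w) (gtype w) i j}"
      have N1: "card ?N \<le> 1" using S(2) i by (auto simp: Sw_def)
      have fN: "finite ?N" using finS by simp
      have AN: "?A \<subseteq> ?N" by (auto simp: Sw_def GA_def)
      have cA: "card ?A = card {j\<in>Sw w. gadget_adj (deg w) (gtype w) i j}" by (rule card_image) (auto simp: inj_on_def)
      show "card {j\<in>Sw w. gadget_adj (deg w) (gtype w) i j} + (if i\<in>Xw w then 1 else 0) \<le> 1"
      proof (cases "i \<in> Xw w")
        case True
        then obtain e where e: "e \<in> inc w" "(oth e w, att (oth e w) e) \<in> S" "i = att w e" by (auto simp: Xw_def)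
        let ?p = "(oth e w, att (oth e w) e)"
        have pe: "?p \<in> extn w i" using e by (auto simp: extn_def)
        have pN1: "?p \<in> ?N" using pe e(2) GA_iff[OF w] by simp
        have "fst ?p \<noteq> w" using extn_prop(1)[OF w pe] .
        then have pN2: "?p \<notin> ?A" by auto
        note pN = pN1 pN2
        then have "insert ?p ?A \<subseteq> ?N" using AN by blast
        then have "card (insert ?p ?A) \<le> 1" using card_mono[OF fN] N1 by (meson le_trans)
        moreover have "finite ?A" using finite_subset[OF AN fN] .
        ultimately show ?thesis using cA pN(2) True by simp
      next
        case False
        then show ?thesis using card_mono[OF fN AN] N1 cA by simp
      qed
    qed
    have "3 * int (card (Sw w)) \<le> Bf (deg w) + (\<Sum>i\<in>attach_verts (deg w). cc (Sw w) (Xw w) i)"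
      by (rule dissloc[OF w Ss Xs hyp])
    also have "(\<Sum>i\<in>attach_verts (deg w). cc (Sw w) (Xw w) i) = (\<Sum>e\<in>inc w. cc (Sw w) (Xw w) (att w e))"
      by (rule sum.reindex_bij_betw[symmetric, OF att_bij[OF w]])
    also have "\<dots> = (\<Sum>e\<in>inc w. chg S w e)"
    proof (rule sum.cong)
      fix e assume e: "e \<in> inc w"
      have "att w e \<in> Xw w \<longleftrightarrow> (oth e w, att (oth e w) e) \<in> S"
      proof
        assume "att w e \<in> Xw w"
        then obtain e' where "e' \<in> inc w" "(oth e' w, att (oth e' w) e') \<in> S" "att w e = att w e'" by (auto simp: Xw_def)
        then show "(oth e w, att (oth e w) e) \<in> S" using att_inj[OF w e] by metis
      next
        assume "(oth e w, att (oth e w) e) \<in> S"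
        then show "att w e \<in> Xw w" using e by (auto simp: Xw_def)
      qed
      then show "cc (Sw w) (Xw w) (att w e) = chg S w e" by (simp add: cc_def chg_def Sw_def)
    qed simp
    finally show ?thesis .
  qed
  have "3 * int (card S) = (\<Sum>w\<in>V. 3 * int (card (Sw w)))"
    using card_split[OF S(1)] by (simp add: Sw_def sum_distrib_left)
  also have "\<dots> \<le> (\<Sum>w\<in>V. Bf (deg w) + (\<Sum>e\<in>inc w. chg S w e))"
    by (rule sum_mono) (rule loc)
  also have "\<dots> = 30 * int k + (\<Sum>w\<in>V. \<Sum>e\<in>inc w. chg S w e)"
    by (simp add: sum.distrib sumB)
  also have "(\<Sum>w\<in>V. \<Sum>e\<in>inc w. chg S w e) = (\<Sum>e\<in>E. \<Sum>w\<in>ends e. chg S w e)"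
  proof -
    have "(\<Sum>w\<in>V. \<Sum>e\<in>inc w. chg S w e) = (\<Sum>w\<in>V. \<Sum>e\<in>{e. e \<in> E \<and> w \<in> ends e}. chg S w e)"
      by (simp add: inc_def)
    also have "\<dots> = (\<Sum>e\<in>E. \<Sum>w\<in>{w. w \<in> V \<and> w \<in> ends e}. chg S w e)"
      by (rule sum.swap_restrict[OF finV finE])
    also have "\<dots> = (\<Sum>e\<in>E. \<Sum>w\<in>ends e. chg S w e)"
    proof (rule sum.cong)
      fix e assume "e \<in> E"
      then have "{w. w \<in> V \<and> w \<in> ends e} = ends e" using ends_sub by auto
      then show "(\<Sum>w\<in>{w. w \<in> V \<and> w \<in> ends e}. chg S w e) = (\<Sum>w\<in>ends e. chg S w e)" by simp
    qed simp
    finally show ?thesis .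
  qed
  also have "(\<Sum>e\<in>E. \<Sum>w\<in>ends e. chg S w e) \<le> 0"
    by (rule sum_nonpos) (rule edge_chg)
  finally show ?thesis by simp
qed

end

context hk begin

definition "T w = (if w \<in> VM then {e\<in>M. w \<in> ends e} else {e\<in>E - M. tl e = w})"
definition "Aw w = att w ` T w"
definition "Dw w = core (deg w) \<union> Aw w"
definition "Dd = {(w,i). w \<in> V \<and> i \<in> Dw w}"

lemma T_sub: "T w \<subseteq> inc w"
  using M_sub tl1 by (auto simp: T_def inc_E)

lemma T_M: "e \<in> M \<Longrightarrow> w \<in> ends e \<Longrightarrow> e \<in> T w"
  by (auto simp: T_def)

lemma T_nM: "e \<notin> M \<Longrightarrow> e \<in> T w \<Longrightarrow> w \<notin> VM \<and> tl e = w"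
  by (auto simp: T_def split: if_splits)

lemma card_T: assumes "w \<in> V" shows "card (T w) = (if w \<in> VM then 1 else 2)"
proof (cases "w \<in> VM")
  case True
  then obtain e where e: "e \<in> M" "w \<in> ends e" by blast
  then have "{e\<in>M. w \<in> ends e} = {e}" using M_uniq by blast
  then show ?thesis using True by (simp add: T_def)
next
  case False
  then show ?thesis using tl2 assms by (simp add: T_def)
qed

lemma Aw_prop: assumes "w \<in> V"
  shows "Aw w \<subseteq> attach_verts (deg w)" "card (Aw w) = card (T w)"
proof -
  show "Aw w \<subseteq> attach_verts (deg w)" using att_in[OF assms] T_sub by (auto simp: Aw_def)
  have "inj_on (att w) (T w)" using att_inj[OF assms] T_sub by (meson inj_onI subsetD)
  then show "card (Aw w) = card (T w)" by (simp add: Aw_def card_image)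
qed

lemma card_Dw: assumes "w \<in> V" shows "card (Dw w) = card (core (deg w)) + (if w \<in> VM then 1 else 2)"
proof -
  have "core (deg w) \<inter> Aw w = {}" using Aw_prop(1)[OF assms] core_ok by blast
  moreover have "finite (core (deg w))" "finite (Aw w)"
    using core_ok[of "deg w"] gv_sub[of "deg w"] finite_subset Aw_prop(1)[OF assms] att_sub_gv[of "deg w"]
    by (meson finite_atLeastAtMost subset_trans)+
  ultimately have "card (Dw w) = card (core (deg w)) + card (Aw w)" unfolding Dw_def by (rule card_Un_disjoint[rotated 2])
  then show ?thesis using Aw_prop(2)[OF assms] card_T[OF assms] by simp
qed

lemma Dd_GV: "Dd \<subseteq> GVs"
  using core_ok Aw_prop(1) att_sub_gv by (fastforce simp: Dd_def Dw_def GV_def)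

lemma partner: assumes "e \<in> E" "v \<in> ends e" shows "(v, att v e) \<in> Dd \<longleftrightarrow> e \<in> T v"
proof -
  have v: "v \<in> V" "e \<in> inc v" using assms ends_sub by (auto simp: inc_E)
  have a: "att v e \<in> attach_verts (deg v)" using att_in[OF v] .
  then have "att v e \<notin> core (deg v)" using core_ok by blast
  moreover have "att v e \<in> Aw v \<longleftrightarrow> e \<in> T v"
  proof
    assume "att v e \<in> Aw v"
    then obtain e' where "e' \<in> T v" "att v e = att v e'" by (auto simp: Aw_def)
    then show "e \<in> T v" using att_inj[OF v(1) v(2)] T_sub by blast
  qed (auto simp: Aw_def)
  ultimately show ?thesis using v by (auto simp: Dd_def Dw_def)
qed

lemma Dd_diss: "dissociation_set GVs GAs Dd"
  unfolding dissociation_set_def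
proof (intro conjI ballI)
  show "Dd \<subseteq> GVs" by (rule Dd_GV)
  fix p assume p: "p \<in> Dd"
  obtain w i where pw: "p = (w,i)" "w \<in> V" "i \<in> Dw w" using p by (auto simp: Dd_def)
  let ?I = "{j\<in>Dw w. gadget_adj (deg w) (gtype w) i j}"
  have sub: "{u\<in>Dd. GAs p u} \<subseteq> (\<lambda>j. (w,j)) ` ?I \<union> (extn w i \<inter> Dd)"
  proof
    fix q assume q: "q \<in> {u\<in>Dd. GAs p u}"
    then have "(fst q = w \<and> gadget_adj (deg w) (gtype w) i (snd q)) \<or> q \<in> extn w i" using GA_iff[OF pw(2)] pw(1) by auto
    then show "q \<in> (\<lambda>j. (w,j)) ` ?I \<union> (extn w i \<inter> Dd)"
    proof
      assume a: "fst q = w \<and> gadget_adj (deg w) (gtype w) i (snd q)"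
      then have "snd q \<in> Dw w" using q by (auto simp: Dd_def)
      then show ?thesis using a by (auto simp: image_iff prod_eq_iff)
    qed (use q in blast)
  qed
  have "Dw w \<subseteq> gadget_verts (deg w)" using core_ok[of "deg w"] Aw_prop(1)[OF pw(2)] att_sub_gv[of "deg w"] unfolding Dw_def by blast
  then have "?I \<subseteq> {0..8}" using gv_sub[of "deg w"] by blast
  then have fI: "finite ?I" using finite_subset by blast
  have cI: "card ((\<lambda>j. (w,j)) ` ?I) = card ?I" by (rule card_image) (auto simp: inj_on_def)
  have ext: "card (extn w i \<inter> Dd) \<le> (if w \<in> VM \<and> i \<in> Aw w then 1 else 0)"
  proof (cases "extn w i \<inter> Dd = {}")
    case True then show ?thesis by simp
  next
    case False
    then obtain q where q: "q \<in> extn w i" "q \<in> Dd" by blast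
    then obtain e where e: "e \<in> inc w" "att w e = i" "q = (oth e w, att (oth e w) e)" by (auto simp: extn_def)
    have eE: "e \<in> E" "w \<in> ends e" using e(1) by (auto simp: inc_E)
    have ov: "oth e w \<in> ends e" "oth e w \<noteq> w" using oth[OF eE] by auto
    have eTv: "e \<in> T (oth e w)" using partner[OF eE(1) ov(1)] q(2) e(3) by simp
    have "i \<in> attach_verts (deg w)" using att_in[OF pw(2) e(1)] e(2) by simp
    then have "i \<notin> core (deg w)" using core_ok by blast
    then have iA: "i \<in> Aw w" using pw(3) by (simp add: Dw_def)
    then obtain e' where "e' \<in> T w" "i = att w e'" by (auto simp: Aw_def)
    then have eTw: "e \<in> T w" using att_inj[OF pw(2) e(1)] T_sub e(2) by blast
    have "e \<in> M"
    proof (rule ccontr)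
      assume "e \<notin> M"
      then show False using T_nM[OF _ eTw] T_nM[OF _ eTv] ov(2) by auto
    qed
    then have "w \<in> VM" using eE by blast
    moreover have "card (extn w i \<inter> Dd) \<le> 1"
    proof -
      have "extn w i = {q}" using extn_single[OF pw(2) e(1)] e(2) e(3) by simp
      then have "extn w i \<inter> Dd \<subseteq> {q}" by blast
      then show ?thesis using card_mono[of "{q}"] by fastforce
    qed
    ultimately show ?thesis using iA by simp
  qed
  have dc: "card ?I + (if w \<in> VM \<and> i \<in> Aw w then 1 else 0) \<le> 1"
  proof -
    have "\<forall>i\<in>core (deg w) \<union> Aw w. card {j\<in>core (deg w) \<union> Aw w. gadget_adj (deg w) (gtype w) i j} + (if w \<in> VM \<and> i\<in>Aw w then 1 else 0) \<le> 1"
    proof (rule dconstr)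
      show "deg w \<in> {1,2,3}" using deg123[OF pw(2)] .
      show "Aw w \<subseteq> attach_verts (deg w)" using Aw_prop(1)[OF pw(2)] .
      show "w \<in> VM \<Longrightarrow> card (Aw w) = 1" using Aw_prop(2)[OF pw(2)] card_T[OF pw(2)] by simp
      show "w \<notin> VM \<Longrightarrow> card (Aw w) = 2 \<and> deg w \<noteq> 1" using Aw_prop(2)[OF pw(2)] card_T[OF pw(2)] cov pw(2) by auto
    qed
    then show ?thesis using pw(3) by (simp add: Dw_def)
  qed
  have "card {u\<in>Dd. GAs p u} \<le> card ((\<lambda>j. (w,j)) ` ?I \<union> (extn w i \<inter> Dd))"
    by (rule card_mono[OF _ sub]) (use fI finite_subset[OF Dd_GV finGV] in simp)
  also have "\<dots> \<le> card ((\<lambda>j. (w,j)) ` ?I) + card (extn w i \<inter> Dd)" by (rule card_Un_le)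
  finally show "card {u\<in>Dd. GAs p u} \<le> 1" using cI ext dc by simp
qed

definition "Cf d = (if d = 1 then 4 else if d = 2 then (2::nat) else 0)"

lemma Dd_card: "card Dd = 10 * k"
proof -
  have "card Dd = (\<Sum>w\<in>V. card {i. (w,i) \<in> Dd})" by (rule card_split[OF Dd_GV])
  also have "\<dots> = (\<Sum>w\<in>V. Cf (deg w) + (if w \<in> VM then 1 else 2))"
  proof (rule sum.cong)
    fix w assume w: "w \<in> V"
    then have "{i. (w,i) \<in> Dd} = Dw w" by (auto simp: Dd_def)
    moreover have "card (core (deg w)) = Cf (deg w)" using core_ok[of "deg w"] by (simp add: Cf_def)
    ultimately show "card {i. (w,i) \<in> Dd} = Cf (deg w) + (if w \<in> VM then 1 else 2)" using card_Dw[OF w] by simp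
  qed simp
  also have "\<dots> = (\<Sum>w\<in>V. Cf (deg w)) + (\<Sum>w\<in>V. (if w \<in> VM then 1 else 2))" by (rule sum.distrib)
  also have "(\<Sum>w\<in>V. Cf (deg w)) = 4 * n 1 + 2 * n 2" using deg_sum[of Cf] by (simp add: Cf_def)
  also have "(\<Sum>w\<in>V. (if w \<in> VM then 1 else 2)) = 2 * card (V - VM) + card VM"
  proof -
    have s1: "(\<Sum>w\<in>V. (if w \<in> VM then 1 else 2::nat)) = (\<Sum>w\<in>V - VM. (if w \<in> VM then 1 else 2)) + (\<Sum>w\<in>VM. (if w\<in>VM then 1 else 2))"
      by (rule sum.subset_diff[OF VM_sub finV])
    have s2: "(\<Sum>w\<in>V - VM. (if w \<in> VM then 1 else 2::nat)) = (\<Sum>w\<in>V - VM. 2)" by (rule sum.cong) auto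
    have s3: "(\<Sum>w\<in>VM. (if w\<in>VM then 1 else 2::nat)) = (\<Sum>w\<in>VM. 1)" by (rule sum.cong) auto
    show ?thesis using s1 s2 s3 by simp
  qed
  finally have c: "card Dd = 4 * n 1 + 2 * n 2 + (2 * card (V - VM) + card VM)" .
  have fVM: "finite VM" using VM_sub finV finite_subset by blast
  have e3: "card (V - VM) + 2 * k = card V" using card_Diff_subset[OF fVM VM_sub] card_mono[OF finV VM_sub] card_VM by simp
  have e4: "card V = n 1 + n 2 + n 3" using deg_sum[of "\<lambda>_. (1::nat)"] by simp
  show ?thesis using c e3 e4 card_VM cnt by linarith
qed

lemma diss_val: "diss GVs GAs = 10 * k"
  unfolding diss_def
proof (rule Max_card_eq[of GVs "dissociation_set GVs GAs" Dd "10 * k"])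
  show "finite GVs" by (rule finGV)
  show "\<And>S. dissociation_set GVs GAs S \<Longrightarrow> S \<subseteq> GVs" by (simp add: dissociation_set_def)
  show "dissociation_set GVs GAs Dd" by (rule Dd_diss)
  show "card Dd = 10 * k" by (rule Dd_card)
qed (rule diss_ub)

end

theorem lemma1:
  fixes k :: nat and V :: "'v set" and E :: "'e set" and ends :: "'e \<Rightarrow> 'v set"
    and att :: "'v \<Rightarrow> 'e \<Rightarrow> nat" and gtype :: "'v \<Rightarrow> bool"
  assumes "k > 0"
    and "in_Hk k V E ends"
    and "valid_attach V E ends att"
  shows "g_connected (GV V E ends) (GA V E ends att gtype)
       \<and> g_cubic (GV V E ends) (GA V E ends att gtype)
       \<and> alpha (GV V E ends) (GA V E ends att gtype) = 6 * k
       \<and> diss (GV V E ends) (GA V E ends att gtype) = 10 * k"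
  proof -
  from assms(2) obtain M tl where
    h: "multigraph V E ends" "m_connected V E ends" "\<forall>v\<in>V. mdeg E ends v \<le> 3"
       "3 * ncount V E ends 1 + 2 * ncount V E ends 2 + ncount V E ends 3 = 6 * k"
       "induced_matching E ends M" "card M = k"
       "\<forall>v\<in>V. mdeg E ends v = 1 \<longrightarrow> v \<in> \<Union>(ends ` M)"
       "\<forall>e\<in>E - M. tl e \<in> ends e"
       "\<forall>v\<in>V - \<Union>(ends ` M). card {e\<in>E - M. tl e = v} = 2"
    unfolding in_Hk_def by blast
  interpret H: hk k V E ends att gtype M tl
    using assms(1) h assms(3) by unfold_locales
  show ?thesis using H.connected H.cubic H.alpha_val H.diss_val by blast
qed

end
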